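(* Let $G$ be a graph with filtration function $f$. Then $(f,f)$-FB persistence has the same expressive power as forward persistence for $f$ (each set of diagrams determines the other). Moreover, with $n$ filtration steps, the $(f,f)$-FB persistence diagrams can be computed as follows: (1) an $H_1$-class (cycle) born at stage $t=i$ of the filtration dies at stage $t=n+i$; (2) the $H_1$-classes born during the contraction stages are exactly the following: for each connected component that appears at filtration stage $i$ and is later merged into a pre-existing (older) component in the filtration stages, first at stage $j>i$, there is one $H_1$-class born at stage $n+i$ and dying at stage $n+j$; (3) the $H_0$ pairs (component death times) are recorded as usual by keeping one vertex representative per component, killing the younger representative when two components merge during filtration, and killing a representative when its component is merged into the contracted point during contraction.
   Context: Graphs are finite, undirected, possibly with self-loops and multi-edges. A filtration function is $f:V\cup E\to\mathbb{R}$ with $f(v),f(w)\le f(e)$ for every edge $e=(v,w)$. Let $a_1<\dots<a_n$ be its distinct values, $G_0=\emptyset$, $G_t=f^{-1}((-\infty,a_t])$ for $1\le t\le n$, and let the intermediate complex $\mathrm{IC}_t$ be the subgraph consisting of the vertices and edges of $G_t\setminus G_{t-1}$ together with endpoints of those edges. The $(f,f)$-FB sequence is $G_1\subset\dots\subset G_n=G\to W_1\to\dots\to W_n=\text{point}$, where $W_1=G/\mathrm{IC}_1$ and $W_i=W_{i-1}/( *\cup\mathrm{IC}_i)$, $*$ being the point to which previously contracted pieces were collapsed; stage $t$ ($1\le t\le n$) is $G_t$ and stage $n+i$ is $W_i$. Persistence diagrams: intervals (birth stage, death stage) of the interval decomposition of $H_k(-;\mathbb{Z}/2)$ applied to the sequence.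 Forward persistence for $f$: diagrams of $G_1\subset\dots\subset G_n$. *)

theory Defs
  imports Complex_Main "HOL-Library.Z2" "HOL-Library.Function_Algebras"
begin

text \<open>A graph: finite vertex set, finite edge set (edges have identities, so multi-edges
  are allowed), an endpoint map (an edge with equal endpoints is a self-loop), together with
  the filtration function f on vertices (fv) and edges (fe).\<close>

record ('v, 'e) fgraph =
  verts :: "'v set"
  edges :: "'e set"
  ends  :: "'e \<Rightarrow> 'v \<times> 'v"
  fv    :: "'v \<Rightarrow> real"
  fe    :: "'e \<Rightarrow> real"

definition filtered_graph :: "('v, 'e) fgraph \<Rightarrow> bool" where
  "filtered_graph G \<longleftrightarrow> finite (verts G) \<and> finite (edges G) \<and>
     (\<forall>e\<in>edges G. fst (ends G e) \<in> verts G \<and> snd (ends G e) \<in> verts G \<and>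
        fv G (fst (ends G e)) \<le> fe G e \<and> fv G (snd (ends G e)) \<le> fe G e)"

definition fvals :: "('v, 'e) fgraph \<Rightarrow> real set" where
  "fvals G = fv G ` verts G \<union> fe G ` edges G"

definition nsteps :: "('v, 'e) fgraph \<Rightarrow> nat" where
  "nsteps G = card (fvals G)"

definition aval :: "('v, 'e) fgraph \<Rightarrow> nat \<Rightarrow> real" where
  "aval G t = sorted_list_of_set (fvals G) ! (t - 1)"

definition subV :: "('v, 'e) fgraph \<Rightarrow> nat \<Rightarrow> 'v set" where
  "subV G t = (if t = 0 then {} else {v \<in> verts G. fv G v \<le> aval G t})"

definition subE :: "('v, 'e) fgraph \<Rightarrow> nat \<Rightarrow> 'e set" where
  "subE G t = (if t = 0 then {} else {e \<in> edges G. fe G e \<le> aval G t})"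

definition icE :: "('v, 'e) fgraph \<Rightarrow> nat \<Rightarrow> 'e set" where
  "icE G t = subE G t - subE G (t - 1)"

definition icV :: "('v, 'e) fgraph \<Rightarrow> nat \<Rightarrow> 'v set" where
  "icV G t = (subV G t - subV G (t - 1)) \<union> fst ` ends G ` icE G t \<union> snd ` ends G ` icE G t"

text \<open>Stage s (1 \<le> s \<le> 2n): for s \<le> n it is G_s; for s = n + i it is
  W_i = G with IC_1 \<union> ... \<union> IC_i successively contracted to the point None.
  Vertices of a stage live in 'v option (None is the contracted point *).\<close>

definition plev :: "('v, 'e) fgraph \<Rightarrow> nat \<Rightarrow> nat" where
  "plev G s = min s (nsteps G)"

definition colV :: "('v, 'e) fgraph \<Rightarrow> nat \<Rightarrow> 'v set" where
  "colV G s = (\<Union>t\<in>{1..s - nsteps G}. icV G t)"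

definition colE :: "('v, 'e) fgraph \<Rightarrow> nat \<Rightarrow> 'e set" where
  "colE G s = (\<Union>t\<in>{1..s - nsteps G}. icE G t)"

definition pt :: "'v set \<Rightarrow> 'v \<Rightarrow> 'v option" where
  "pt K v = (if v \<in> K then None else Some v)"

definition cellsV :: "('v, 'e) fgraph \<Rightarrow> nat \<Rightarrow> 'v option set" where
  "cellsV G s = pt (colV G s) ` subV G (plev G s)"

definition cellsE :: "('v, 'e) fgraph \<Rightarrow> nat \<Rightarrow> 'e set" where
  "cellsE G s = subE G (plev G s) - colE G s"

definition C0 :: "('v, 'e) fgraph \<Rightarrow> nat \<Rightarrow> ('v option \<Rightarrow> bit) set" where
  "C0 G s = {c. \<forall>x. x \<notin> cellsV G s \<longrightarrow> c x = 0}"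

definition C1 :: "('v, 'e) fgraph \<Rightarrow> nat \<Rightarrow> ('e \<Rightarrow> bit) set" where
  "C1 G s = {c. \<forall>e. e \<notin> cellsE G s \<longrightarrow> c e = 0}"

definition bd :: "('v, 'e) fgraph \<Rightarrow> nat \<Rightarrow> ('e \<Rightarrow> bit) \<Rightarrow> ('v option \<Rightarrow> bit)" where
  "bd G s c = (\<lambda>x. \<Sum>e\<in>cellsE G s. c e *
      (of_bool (pt (colV G s) (fst (ends G e)) = x) + of_bool (pt (colV G s) (snd (ends G e)) = x)))"

definition Z1 :: "('v, 'e) fgraph \<Rightarrow> nat \<Rightarrow> ('e \<Rightarrow> bit) set" where
  "Z1 G s = {c \<in> C1 G s. bd G s c = 0}"

definition B0 :: "('v, 'e) fgraph \<Rightarrow> nat \<Rightarrow> ('v option \<Rightarrow> bit) set" where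
  "B0 G s = bd G s ` C1 G s"

text \<open>The chain maps induced by the map from stage s to stage s+1
  (inclusion G_s \<subseteq> G_(s+1), resp. the quotient map collapsing onto the point).\<close>

definition vmap :: "'v set \<Rightarrow> 'v option \<Rightarrow> 'v option" where
  "vmap K x = (case x of None \<Rightarrow> None | Some v \<Rightarrow> pt K v)"

definition step0 :: "('v, 'e) fgraph \<Rightarrow> nat \<Rightarrow> ('v option \<Rightarrow> bit) \<Rightarrow> ('v option \<Rightarrow> bit)" where
  "step0 G s c = (\<lambda>x. \<Sum>y\<in>cellsV G s. if vmap (colV G (Suc s)) y = x then c y else 0)"

definition step1 :: "('v, 'e) fgraph \<Rightarrow> nat \<Rightarrow> ('e \<Rightarrow> bit) \<Rightarrow> ('e \<Rightarrow> bit)" where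
  "step1 G s c = (\<lambda>e. if e \<in> colE G (Suc s) then 0 else c e)"

primrec comp0 :: "('v, 'e) fgraph \<Rightarrow> nat \<Rightarrow> nat \<Rightarrow> ('v option \<Rightarrow> bit) \<Rightarrow> ('v option \<Rightarrow> bit)" where
  "comp0 G s 0 = (\<lambda>c. c)"
| "comp0 G s (Suc t) = (if Suc t \<le> s then (\<lambda>c. c) else step0 G t \<circ> comp0 G s t)"

primrec comp1 :: "('v, 'e) fgraph \<Rightarrow> nat \<Rightarrow> nat \<Rightarrow> ('e \<Rightarrow> bit) \<Rightarrow> ('e \<Rightarrow> bit)" where
  "comp1 G s 0 = (\<lambda>c. c)"
| "comp1 G s (Suc t) = (if Suc t \<le> s then (\<lambda>c. c) else step1 G t \<circ> comp1 G s t)"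

definition chscale :: "bit \<Rightarrow> ('a \<Rightarrow> bit) \<Rightarrow> ('a \<Rightarrow> bit)" where
  "chscale a c = (\<lambda>x. a * c x)"

definition chspan :: "('a \<Rightarrow> bit) set \<Rightarrow> ('a \<Rightarrow> bit) set" where
  "chspan S = module.span chscale S"

definition chdim :: "('a \<Rightarrow> bit) set \<Rightarrow> nat" where
  "chdim S = vector_space.dim chscale S"

text \<open>Rank of H_k(stage s) \<rightarrow> H_k(stage t), for a chain map phi with H_k = Z_k / B_k:
  the image is (phi(Z_k(s)) + B_k(t)) / B_k(t). For graphs Z_0 = C_0, B_1 = 0 and
  H_k = 0 for k \<ge> 2.\<close>

definition hrank :: "('v, 'e) fgraph \<Rightarrow> nat \<Rightarrow> nat \<Rightarrow> nat \<Rightarrow> nat" where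
  "hrank G k s t =
     (if k = 0 then chdim (chspan (comp0 G s t ` C0 G s \<union> B0 G t)) - chdim (B0 G t)
      else if k = 1 then chdim (chspan (comp1 G s t ` Z1 G s \<union> {0})) - chdim {0 :: 'e \<Rightarrow> bit}
      else 0)"

text \<open>For a sequence of m stages with rank function r (r i j = rank of the map from stage i
  to stage j), the multiplicity of the interval (b, d) in the interval decomposition:
  born at stage b, dies at stage d (d = m + 1 means it never dies), 1 \<le> b < d \<le> m + 1.\<close>

definition pers_mult :: "(nat \<Rightarrow> nat \<Rightarrow> nat) \<Rightarrow> nat \<Rightarrow> nat \<Rightarrow> nat \<Rightarrow> nat" where
  "pers_mult r m b d =
     (let r' = (\<lambda>i j. if 1 \<le> i \<and> i \<le> j \<and> j \<le> m then int (r i j) else 0) in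
      if 1 \<le> b \<and> b < d \<and> d \<le> m + 1
      then nat (r' b (d - 1) - r' (b - 1) (d - 1) - r' b d + r' (b - 1) d)
      else 0)"

text \<open>Forward persistence: stages G_1 \<subseteq> ... \<subseteq> G_n (the first n stages).\<close>

definition fwd_pd :: "('v, 'e) fgraph \<Rightarrow> nat \<Rightarrow> nat \<Rightarrow> nat \<Rightarrow> nat" where
  "fwd_pd G k b d = pers_mult (hrank G k) (nsteps G) b d"

definition fb_pd :: "('v, 'e) fgraph \<Rightarrow> nat \<Rightarrow> nat \<Rightarrow> nat \<Rightarrow> nat" where
  "fb_pd G k b d = pers_mult (hrank G k) (2 * nsteps G) b d"

end

theory Submission
  imports Defs
begin

declare add_bit_eq_xor[simp del] mult_bit_eq_and[simp del]

lemma vs_ch: "vector_space (chscale :: bit \<Rightarrow> ('a \<Rightarrow> bit) \<Rightarrow> ('a \<Rightarrow> bit))"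
  by unfold_locales (auto simp: chscale_def fun_eq_iff algebra_simps)

interpretation cs: vector_space "chscale :: bit \<Rightarrow> ('a \<Rightarrow> bit) \<Rightarrow> ('a \<Rightarrow> bit)"
  by (rule vs_ch)

interpretation csp: vector_space_pair "chscale :: bit \<Rightarrow> ('a \<Rightarrow> bit) \<Rightarrow> ('a \<Rightarrow> bit)" "chscale :: bit \<Rightarrow> ('b \<Rightarrow> bit) \<Rightarrow> ('b \<Rightarrow> bit)"
  by unfold_locales

lemma chdim_eq: "chdim S = cs.dim S" unfolding chdim_def ..
lemma chspan_eq: "chspan S = cs.span S" unfolding chspan_def ..

lemma span_Int_disjoint:
  assumes B: "cs.independent B" and C: "C \<subseteq> B" and D: "D \<subseteq> B" and CD: "C \<inter> D = {}"
    and x1: "x \<in> cs.span C" and x2: "x \<in> cs.span D"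
  shows "x = 0"
proof -
  have r1: "cs.representation B x = cs.representation C x"
    by (rule cs.representation_extend[OF B x1 C])
  have r2: "cs.representation B x = cs.representation D x"
    by (rule cs.representation_extend[OF B x2 D])
  have z: "cs.representation B x = (\<lambda>b. 0)"
  proof
    fix b show "cs.representation B x b = 0"
      using cs.representation_ne_zero[of C x b] cs.representation_ne_zero[of D x b] r1 r2 CD by auto
  qed
  have xB: "x \<in> cs.span B" using cs.span_mono[OF C] x1 by auto
  show ?thesis
    using cs.sum_nonzero_representation_eq[OF B xB] z by simp
qed

lemma rank_nullity:
  fixes f :: "('a \<Rightarrow> bit) \<Rightarrow> ('b \<Rightarrow> bit)"
  assumes lf: "Vector_Spaces.linear chscale chscale f" and S: "cs.subspace S" and T: "finite T" and ST: "S \<subseteq> cs.span T"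
  shows "cs.dim S = cs.dim (f ` S) + cs.dim {x\<in>S. f x = 0}"
proof -
  define K where "K = {x\<in>S. f x = 0}"
  have Ksub: "cs.subspace K"
    unfolding K_def cs.subspace_def using S[unfolded cs.subspace_def]
    by (auto simp: csp.linear_0[OF lf] csp.linear_add[OF lf] csp.linear_scale[OF lf])
  obtain BK where BK: "BK \<subseteq> K" "cs.independent BK" "K \<subseteq> cs.span BK" "card BK = cs.dim K"
    using cs.basis_exists by blast
  have "BK \<subseteq> S" using BK(1) K_def by auto
  then obtain B where B: "BK \<subseteq> B" "B \<subseteq> S" "cs.independent B" "S \<subseteq> cs.span B"
    using cs.maximal_independent_subset_extend[OF _ BK(2)] by metis
  have finB: "finite B" using cs.independent_span_bound[OF T B(3)] B(2) ST by auto
  have dimS: "cs.dim S = card B" using cs.basis_card_eq_dim[OF B(2) B(4) B(3)] by simp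
  define C where "C = B - BK"
  have spanB: "cs.span B \<subseteq> S" using cs.span_minimal[OF B(2) S] .
  have inj: "inj_on f (cs.span C)"
  proof (subst csp.linear_inj_on_iff_eq_0[OF lf])
    show "cs.subspace (cs.span C)" by simp
    show "\<forall>x\<in>cs.span C. f x = 0 \<longrightarrow> x = 0"
    proof (intro ballI impI)
      fix x assume x: "x \<in> cs.span C" "f x = 0"
      have "x \<in> cs.span B" using cs.span_mono[of C B] x(1) C_def by auto
      hence "x \<in> K" using spanB x(2) K_def by auto
      hence "x \<in> cs.span BK" using BK(3) by auto
      thus "x = 0" using span_Int_disjoint[OF B(3), of C BK x] x(1) C_def B(1) by auto
    qed
  qed
  have indC: "cs.independent C" using cs.independent_mono[OF B(3)] C_def by auto
  have ind: "cs.independent (f ` C)"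
    by (rule csp.linear_independent_injective_image[OF lf indC inj])
  have injC: "inj_on f C" using inj cs.span_superset[of C] by (auto intro: inj_on_subset)
  have fS1: "f ` S \<subseteq> cs.span (f ` C)"
  proof
    fix y assume "y \<in> f ` S"
    then obtain x where x: "x \<in> S" "y = f x" by auto
    have "x \<in> cs.span B" using x B(4) by auto
    hence "f x \<in> f ` cs.span B" by auto
    also have "\<dots> = cs.span (f ` B)" using csp.linear_span_image[OF lf] by simp
    also have "\<dots> \<subseteq> cs.span (f ` C)"
    proof (rule cs.span_minimal)
      show "cs.subspace (cs.span (f ` C))" by simp
      show "f ` B \<subseteq> cs.span (f ` C)"
      proof
        fix z assume "z \<in> f ` B"
        then obtain b where b: "b \<in> B" "z = f b" by auto
        show "z \<in> cs.span (f ` C)"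
        proof (cases "b \<in> BK")
          case True
          hence "f b = 0" using BK(1) K_def by auto
          thus ?thesis using b cs.span_zero by simp
        next
          case False
          thus ?thesis using b C_def by (auto intro: cs.span_base)
        qed
      qed
    qed
    finally show "y \<in> cs.span (f ` C)" using x by simp
  qed
  have fS2: "f ` C \<subseteq> f ` S" using C_def B(2) by auto
  have dimfS: "cs.dim (f ` S) = card (f ` C)"
    using cs.basis_card_eq_dim[OF fS2 fS1 ind] by simp
  have "card (f ` C) = card C" using card_image[OF injC] .
  moreover have "card C = card B - card BK" unfolding C_def
    using card_Diff_subset[OF finite_subset[OF B(1) finB] B(1)] .
  moreover have "card BK \<le> card B" using card_mono[OF finB B(1)] .
  ultimately show ?thesis using dimS dimfS BK(4) K_def by simp
qed

definition Cf :: "'a set \<Rightarrow> ('a \<Rightarrow> bit) set" where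
  "Cf A = {c. \<forall>x. x \<notin> A \<longrightarrow> c x = 0}"
definition dl :: "'a \<Rightarrow> 'a \<Rightarrow> bit" where
  "dl a = (\<lambda>x. if x = a then 1 else 0)"
definition cutS :: "'a set \<Rightarrow> ('a \<Rightarrow> bit) \<Rightarrow> ('a \<Rightarrow> bit)" where
  "cutS A h = (\<lambda>x. if x \<in> A then 0 else h x)"

lemma sum_app: "(\<Sum>a\<in>A. f a) x = (\<Sum>a\<in>A. f a x)"
  by (induction A rule: infinite_finite_induct) auto

lemma chscale_bit: "chscale c x = (if c = 0 then 0 else x)"
  by (cases c) (auto simp: chscale_def fun_eq_iff)

lemma subspace_Cf: "cs.subspace (Cf A)"
  unfolding cs.subspace_def Cf_def by (auto simp: chscale_def)

lemma dl_in_Cf: "a \<in> A \<Longrightarrow> dl a \<in> Cf A"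
  by (auto simp: dl_def Cf_def)

lemma Cf_expand:
  assumes "finite A" "c \<in> Cf A"
  shows "c = (\<Sum>a\<in>A. chscale (c a) (dl a))"
proof
  fix x
  have "(\<Sum>a\<in>A. chscale (c a) (dl a)) x = (\<Sum>a\<in>A. c a * dl a x)"
    by (simp add: chscale_def sum_app)
  also have "\<dots> = (if x \<in> A then c x else 0)"
    using assms(1) by (simp add: dl_def if_distrib cong: if_cong)
  also have "\<dots> = c x" using assms(2) by (auto simp: Cf_def)
  finally show "c x = (\<Sum>a\<in>A. chscale (c a) (dl a)) x" by simp
qed

lemma Cf_span: assumes "finite A" shows "Cf A = cs.span (dl ` A)"
proof
  show "Cf A \<subseteq> cs.span (dl ` A)"
  proof
    fix c assume c: "c \<in> Cf A"
    have "(\<Sum>a\<in>A. chscale (c a) (dl a)) \<in> cs.span (dl ` A)"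
      by (intro cs.span_sum cs.span_scale cs.span_base) auto
    thus "c \<in> cs.span (dl ` A)" using Cf_expand[OF assms c] by simp
  qed
  show "cs.span (dl ` A) \<subseteq> Cf A"
    by (rule cs.span_minimal) (auto simp: subspace_Cf dl_in_Cf)
qed

lemma inj_dl: "inj dl"
  by (rule injI) (auto simp: dl_def fun_eq_iff split: if_splits)

lemma indep_dl: "finite A \<Longrightarrow> cs.independent (dl ` A)"
proof (rule cs.independent_if_scalars_zero)
  assume A: "finite A"
  show "finite (dl ` A)" using A by simp
  fix g x assume s: "(\<Sum>x\<in>dl ` A. chscale (g x) x) = 0" and x: "x \<in> dl ` A"
  then obtain a where a: "a \<in> A" "x = dl a" by auto
  have "(\<Sum>x\<in>dl ` A. chscale (g x) x) = (\<Sum>b\<in>A. chscale (g (dl b)) (dl b))"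
    by (simp add: sum.reindex inj_on_subset[OF inj_dl])
  hence "(\<Sum>b\<in>A. chscale (g (dl b)) (dl b)) a = 0" using s by simp
  hence "(\<Sum>b\<in>A. g (dl b) * dl b a) = 0" by (simp add: chscale_def sum_app)
  moreover have "(\<Sum>b\<in>A. g (dl b) * dl b a) = g (dl a)"
    using A a(1) by (simp add: dl_def if_distrib cong: if_cong)
  ultimately show "g x = 0" using a by simp
qed

lemma dim_Cf: "finite A \<Longrightarrow> cs.dim (Cf A) = card A"
  using cs.dim_span_eq_card_independent[OF indep_dl, of A] Cf_span[of A]
  by (simp add: card_image inj_on_subset[OF inj_dl])

lemma dim_zero: "cs.dim {0} = 0"
proof -
  have "cs.span {} = cs.span {0::'a\<Rightarrow>bit}" by simp
  from cs.dim_eq_card[OF this cs.independent_empty] show ?thesis by simp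
qed

lemma linearI:
  fixes f :: "('a \<Rightarrow> bit) \<Rightarrow> ('b \<Rightarrow> bit)"
  assumes "\<And>x y. f (x + y) = f x + f y" "\<And>x. f 0 = 0"
  shows "Vector_Spaces.linear chscale chscale f"
  unfolding Vector_Spaces.linear_iff using assms vs_ch[where 'a='a] vs_ch[where 'a='b]
  by (auto simp: chscale_bit)

lemma linear_cutS: "Vector_Spaces.linear chscale chscale (cutS A)"
  by (rule linearI) (auto simp: cutS_def fun_eq_iff)

lemma dim_inj:
  fixes f :: "('a \<Rightarrow> bit) \<Rightarrow> ('b \<Rightarrow> bit)"
  assumes lf: "Vector_Spaces.linear chscale chscale f" and S: "cs.subspace S" and T: "finite T" and ST: "S \<subseteq> cs.span T"
    and inj: "\<And>x. x \<in> S \<Longrightarrow> f x = 0 \<Longrightarrow> x = 0"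
  shows "cs.dim (f ` S) = cs.dim S"
proof -
  have "{x\<in>S. f x = 0} = {0}" using inj cs.subspace_0[OF S] csp.linear_0[OF lf] by auto
  thus ?thesis using rank_nullity[OF lf S T ST] dim_zero by simp
qed

lemma subspace_image: 
  fixes f :: "('a \<Rightarrow> bit) \<Rightarrow> ('b \<Rightarrow> bit)"
  assumes lf: "Vector_Spaces.linear chscale chscale f" and S: "cs.subspace S"
  shows "cs.subspace (f ` S)"
  using csp.linear_subspace_image[OF lf S] .

lemma subspace_kernel: 
  fixes f :: "('a \<Rightarrow> bit) \<Rightarrow> ('b \<Rightarrow> bit)"
  assumes lf: "Vector_Spaces.linear chscale chscale f" and S: "cs.subspace S"
  shows "cs.subspace {x\<in>S. f x = 0}"
  using S unfolding cs.subspace_def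
  by (auto simp: csp.linear_0[OF lf] csp.linear_add[OF lf] csp.linear_scale[OF lf])

lemma dim_sum_Cf:
  assumes A: "finite A" and B: "cs.subspace B" and W: "finite W" and BW: "B \<subseteq> Cf W"
  shows "cs.dim (cs.span (Cf A \<union> B)) = card A + cs.dim (cutS A ` B)"
proof -
  let ?S = "cs.span (Cf A \<union> B)"
  have Sfin: "?S \<subseteq> cs.span (dl ` (A \<union> W))"
  proof (rule cs.span_mono[THEN subset_trans[OF _ equalityD1[OF cs.span_span]]])
    show "Cf A \<union> B \<subseteq> cs.span (dl ` (A \<union> W))"
      using Cf_span[of "A \<union> W"] A W BW by (auto simp: Cf_def)
  qed
  have Seq: "?S = {x + y | x y. x \<in> Cf A \<and> y \<in> B}"
    using cs.span_Un[of "Cf A" B] cs.span_eq_iff[THEN iffD2, OF B] cs.span_eq_iff[THEN iffD2, OF subspace_Cf[of A]] by simp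
  have img: "cutS A ` ?S = cutS A ` B"
  proof
    show "cutS A ` ?S \<subseteq> cutS A ` B"
    proof
      fix z assume "z \<in> cutS A ` ?S"
      then obtain x y where xy: "x \<in> Cf A" "y \<in> B" "z = cutS A (x + y)" using Seq by auto
      have "cutS A (x + y) = cutS A y" using xy(1) by (auto simp: cutS_def Cf_def fun_eq_iff)
      thus "z \<in> cutS A ` B" using xy by auto
    qed
    show "cutS A ` B \<subseteq> cutS A ` ?S" using cs.span_superset[of "Cf A \<union> B"] by auto
  qed
  have ker: "{x \<in> ?S. cutS A x = 0} = Cf A"
  proof
    show "{x \<in> ?S. cutS A x = 0} \<subseteq> Cf A"
      by (auto simp: cutS_def Cf_def fun_eq_iff split: if_splits)
    show "Cf A \<subseteq> {x \<in> ?S. cutS A x = 0}"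
      using cs.span_superset[of "Cf A \<union> B"] by (auto simp: cutS_def Cf_def fun_eq_iff)
  qed
  show ?thesis
    using rank_nullity[OF linear_cutS[of A] cs.subspace_span _ Sfin] img ker dim_Cf[OF A] A W
    by simp
qed

lemma fin_fvals: "filtered_graph G \<Longrightarrow> finite (fvals G)"
  by (auto simp: filtered_graph_def fvals_def)

lemma xs_props:
  assumes "filtered_graph G"
  shows "set (sorted_list_of_set (fvals G)) = fvals G" "sorted (sorted_list_of_set (fvals G))"
    "length (sorted_list_of_set (fvals G)) = nsteps G"
  using fin_fvals[OF assms] by (auto simp: nsteps_def)

lemma aval_mono:
  assumes G: "filtered_graph G" and "1 \<le> a" "a \<le> b" "b \<le> nsteps G"
  shows "aval G a \<le> aval G b"
proof -
  have "a - 1 \<le> b - 1" "b - 1 < length (sorted_list_of_set (fvals G))" using assms xs_props(3)[OF G] by auto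
  from sorted_nth_mono[OF xs_props(2)[OF G] this] show ?thesis unfolding aval_def .
qed

lemma val_le_last:
  assumes G: "filtered_graph G" and x: "x \<in> fvals G"
  shows "x \<le> aval G (nsteps G)"
proof -
  let ?xs = "sorted_list_of_set (fvals G)"
  have "x \<in> set ?xs" using x xs_props(1)[OF G] by simp
  then obtain k where k: "k < length ?xs" "?xs ! k = x" unfolding in_set_conv_nth by blast
  have "k \<le> length ?xs - 1" "length ?xs - 1 < length ?xs" using k by auto
  from sorted_nth_mono[OF xs_props(2)[OF G] this] have "?xs ! k \<le> ?xs ! (length ?xs - 1)" .
  thus ?thesis using k xs_props[OF G] by (simp add: aval_def)
qed

lemma first_le:
  assumes G: "filtered_graph G" and n: "1 \<le> nsteps G"
  shows "aval G 1 \<in> fvals G" "\<And>x. x \<in> fvals G \<Longrightarrow> aval G 1 \<le> x"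
proof -
  let ?xs = "sorted_list_of_set (fvals G)"
  have "?xs ! 0 \<in> set ?xs" using n xs_props(3)[OF G] by simp
  thus "aval G 1 \<in> fvals G" using xs_props(1)[OF G] by (simp add: aval_def)
  fix x assume x: "x \<in> fvals G"
  have "x \<in> set ?xs" using x xs_props(1)[OF G] by simp
  then obtain k where k: "k < length ?xs" "?xs ! k = x" unfolding in_set_conv_nth by blast
  have "0 \<le> k" by simp
  from sorted_nth_mono[OF xs_props(2)[OF G] this k(1)] have "?xs ! 0 \<le> ?xs ! k" .
  thus "aval G 1 \<le> x" using k by (simp add: aval_def)
qed

lemma subV_mono:
  assumes G: "filtered_graph G" and "a \<le> b" "b \<le> nsteps G"
  shows "subV G a \<subseteq> subV G b"
  using assms aval_mono[OF G, of a b] by (auto simp: subV_def)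

lemma subE_mono:
  assumes G: "filtered_graph G" and "a \<le> b" "b \<le> nsteps G"
  shows "subE G a \<subseteq> subE G b"
  using assms aval_mono[OF G, of a b] by (auto simp: subE_def)

lemma subV_top:
  assumes G: "filtered_graph G" and "1 \<le> nsteps G"
  shows "subV G (nsteps G) = verts G"
  using assms val_le_last[OF G] by (auto simp: subV_def fvals_def)

lemma subE_top:
  assumes G: "filtered_graph G" and "1 \<le> nsteps G"
  shows "subE G (nsteps G) = edges G"
  using assms val_le_last[OF G] by (auto simp: subE_def fvals_def)

lemma ends_sub:
  assumes G: "filtered_graph G" and e: "e \<in> subE G t"
  shows "fst (ends G e) \<in> subV G t" "snd (ends G e) \<in> subV G t"
  using assms by (auto simp: subE_def subV_def filtered_graph_def split: if_splits)

lemma fin_subV: "filtered_graph G \<Longrightarrow> finite (subV G t)"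
  by (auto simp: subV_def filtered_graph_def)
lemma fin_subE: "filtered_graph G \<Longrightarrow> finite (subE G t)"
  by (auto simp: subE_def filtered_graph_def)

lemma V1_ne:
  assumes G: "filtered_graph G" and n: "1 \<le> nsteps G"
  shows "subV G 1 \<noteq> {}"
proof -
  have a: "aval G 1 \<in> fvals G" using first_le[OF G n] by simp
  show ?thesis
  proof (cases "aval G 1 \<in> fv G ` verts G")
    case True
    then obtain v where "v \<in> verts G" "fv G v = aval G 1" by auto
    thus ?thesis by (auto simp: subV_def)
  next
    case False
    then obtain e where e: "e \<in> edges G" "fe G e = aval G 1" using a by (auto simp: fvals_def)
    hence "fst (ends G e) \<in> subV G 1" using G by (auto simp: subV_def filtered_graph_def)
    thus ?thesis by auto
  qed
qed

lemma union_diff_tel: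
  fixes X :: "nat \<Rightarrow> 'a set"
  assumes mono: "\<And>a b. a \<le> b \<Longrightarrow> b \<le> n \<Longrightarrow> X a \<subseteq> X b" and X0: "X 0 = {}"
  shows "i \<le> n \<Longrightarrow> (\<Union>t\<in>{1..i}. X t - X (t - 1)) = X i"
proof (induction i)
  case 0 thus ?case using X0 by simp
next
  case (Suc i)
  have "{1..Suc i} = insert (Suc i) {1..i}" by auto
  hence "(\<Union>t\<in>{1..Suc i}. X t - X (t - 1)) = (X (Suc i) - X i) \<union> X i"
    using Suc by simp
  also have "\<dots> = X (Suc i)" using mono[of i "Suc i"] Suc by auto
  finally show ?case .
qed

lemma subE0[simp]: "subE G 0 = {}" by (simp add: subE_def)
lemma subV0[simp]: "subV G 0 = {}" by (simp add: subV_def)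

lemma colE_low: "s \<le> nsteps G \<Longrightarrow> colE G s = {}"
  by (simp add: colE_def)
lemma colV_low: "s \<le> nsteps G \<Longrightarrow> colV G s = {}"
  by (simp add: colV_def)

lemma colE_high:
  assumes G: "filtered_graph G" and i: "i \<le> nsteps G"
  shows "colE G (nsteps G + i) = subE G i"
proof -
  have "colE G (nsteps G + i) = (\<Union>t\<in>{1..i}. subE G t - subE G (t - 1))"
    by (simp add: colE_def icE_def)
  also have "\<dots> = subE G i"
    using union_diff_tel[of "nsteps G" "subE G" i] subE_mono[OF G] i by simp
  finally show ?thesis .
qed

lemma colV_high:
  assumes G: "filtered_graph G" and i: "i \<le> nsteps G"
  shows "colV G (nsteps G + i) = subV G i"
proof -
  have eq: "colV G (nsteps G + i) = (\<Union>t\<in>{1..i}. icV G t)"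
    by (simp add: colV_def)
  have "(\<Union>t\<in>{1..i}. subV G t - subV G (t - 1)) = subV G i"
    using union_diff_tel[of "nsteps G" "subV G" i] subV_mono[OF G] i by simp
  moreover have "(\<Union>t\<in>{1..i}. subV G t - subV G (t - 1)) \<subseteq> (\<Union>t\<in>{1..i}. icV G t)"
    by (auto simp: icV_def)
  moreover have "(\<Union>t\<in>{1..i}. icV G t) \<subseteq> subV G i"
  proof
    fix v assume "v \<in> (\<Union>t\<in>{1..i}. icV G t)"
    then obtain t where t: "t \<in> {1..i}" "v \<in> icV G t" by auto
    have "v \<in> subV G t" using t(2) ends_sub[OF G] by (auto simp: icV_def icE_def)
    thus "v \<in> subV G i" using subV_mono[OF G, of t i] t(1) i by auto
  qed
  ultimately show ?thesis using eq by auto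
qed

lemma colE_mono: "s \<le> t \<Longrightarrow> colE G s \<subseteq> colE G t"
  unfolding colE_def using diff_le_mono[of s t "nsteps G"] by (intro UN_mono) auto
lemma colV_mono: "s \<le> t \<Longrightarrow> colV G s \<subseteq> colV G t"
  unfolding colV_def using diff_le_mono[of s t "nsteps G"] by (intro UN_mono) auto

definition bdp :: "('v, 'e) fgraph \<Rightarrow> 'e set \<Rightarrow> 'v set \<Rightarrow> ('e \<Rightarrow> bit) \<Rightarrow> ('v option \<Rightarrow> bit)" where
  "bdp G F K c = (\<lambda>x. \<Sum>e\<in>F. c e *
      (of_bool (pt K (fst (ends G e)) = x) + of_bool (pt K (snd (ends G e)) = x)))"

definition Dm :: "('v, 'e) fgraph \<Rightarrow> 'e set \<Rightarrow> 'v set \<Rightarrow> ('e \<Rightarrow> bit) \<Rightarrow> ('v option \<Rightarrow> bit)" where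
  "Dm G F K c = cutS (Some ` K) (bdp G F {} c)"

definition PP :: "('v, 'e) fgraph \<Rightarrow> 'e set \<Rightarrow> 'v set \<Rightarrow> nat" where
  "PP G F K = cs.dim (Dm G F K ` Cf F)"

lemma bd_eq: "bd G s = bdp G (cellsE G s) (colV G s)"
  by (simp add: bd_def bdp_def fun_eq_iff)

lemma lin_bdp: "Vector_Spaces.linear chscale chscale (bdp G F K)"
  by (rule linearI) (auto simp: bdp_def fun_eq_iff sum.distrib distrib_right)

lemma lin_Dm: "Vector_Spaces.linear chscale chscale (Dm G F K)"
  by (rule linearI) (auto simp: Dm_def cutS_def bdp_def fun_eq_iff sum.distrib distrib_right)

lemma bdp_restrict:
  assumes "finite F" "A \<subseteq> F" "c \<in> Cf A"
  shows "bdp G F K c = bdp G A K c"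
  unfolding bdp_def fun_eq_iff
  using assms by (auto intro!: sum.mono_neutral_right simp: Cf_def)

lemma Dm_restrict:
  assumes "finite F" "A \<subseteq> F" "c \<in> Cf A"
  shows "Dm G F K c = Dm G A K c"
  using bdp_restrict[OF assms, of G "{}"] by (simp add: Dm_def)

lemma Cf_mono: "A \<subseteq> B \<Longrightarrow> Cf A \<subseteq> Cf B"
  by (auto simp: Cf_def)

lemma Dm_drop_img:
  assumes F: "finite F" and D: "\<And>e. e \<in> D \<Longrightarrow> fst (ends G e) \<in> K \<and> snd (ends G e) \<in> K"
  shows "Dm G F K ` Cf F = Dm G (F - D) K ` Cf (F - D)"
proof
  show "Dm G (F - D) K ` Cf (F - D) \<subseteq> Dm G F K ` Cf F"
  proof
    fix y assume "y \<in> Dm G (F - D) K ` Cf (F - D)"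
    then obtain c where c: "c \<in> Cf (F - D)" "y = Dm G (F - D) K c" by auto
    have "Dm G F K c = Dm G (F - D) K c" using Dm_restrict[OF F _ c(1)] by auto
    moreover have "c \<in> Cf F" using c(1) Cf_mono[of "F - D" F] by auto
    ultimately show "y \<in> Dm G F K ` Cf F" using c by (metis image_eqI)
  qed
  show "Dm G F K ` Cf F \<subseteq> Dm G (F - D) K ` Cf (F - D)"
  proof
    fix y assume "y \<in> Dm G F K ` Cf F"
    then obtain c where c: "c \<in> Cf F" "y = Dm G F K c" by auto
    have c': "cutS D c \<in> Cf (F - D)" using c(1) by (auto simp: Cf_def cutS_def)
    have "Dm G F K c = Dm G (F - D) K (cutS D c)"
    proof
      fix x
      show "Dm G F K c x = Dm G (F - D) K (cutS D c) x"
      proof (cases "x \<in> Some ` K")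
        case True thus ?thesis by (simp add: Dm_def cutS_def)
      next
        case False
        have "bdp G F {} c x = bdp G F {} (cutS D c) x"
          unfolding bdp_def
        proof (rule sum.cong[OF refl])
          fix e assume "e \<in> F"
          show "c e * (of_bool (pt {} (fst (ends G e)) = x) + of_bool (pt {} (snd (ends G e)) = x)) =
                cutS D c e * (of_bool (pt {} (fst (ends G e)) = x) + of_bool (pt {} (snd (ends G e)) = x))"
            using D[of e] False by (auto simp: cutS_def pt_def)
        qed
        also have "\<dots> = bdp G (F - D) {} (cutS D c) x"
          using bdp_restrict[OF F _ c', where G=G and K="{}"] by auto
        finally show ?thesis using False by (simp add: Dm_def cutS_def)
      qed
    qed
    thus "y \<in> Dm G (F - D) K ` Cf (F - D)" using c c' by auto
  qed
qed

lemma PP_drop: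
  assumes F: "finite F" and D: "\<And>e. e \<in> D \<Longrightarrow> fst (ends G e) \<in> K \<and> snd (ends G e) \<in> K"
  shows "PP G F K = PP G (F - D) K"
  unfolding PP_def using Dm_drop_img[OF F D] by simp

lemma Cf_empty: "Cf {} = {0}"
  by (auto simp: Cf_def fun_eq_iff)

lemma PP_empty: "PP G {} K = 0"
  unfolding PP_def Cf_empty using csp.linear_0[OF lin_Dm[of G "{}" K]] dim_zero by simp

lemma cutNone: "cutS {None} (bdp G F K c) = Dm G F K c"
proof
  fix x show "cutS {None} (bdp G F K c) x = Dm G F K c x"
  proof (cases x)
    case None thus ?thesis by (simp add: cutS_def Dm_def bdp_def pt_def)
  next
    case (Some v)
    show ?thesis
    proof (cases "v \<in> K")
      case True thus ?thesis using Some by (auto simp: cutS_def Dm_def bdp_def pt_def intro!: sum.neutral)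
    next
      case False thus ?thesis using Some by (auto simp: cutS_def Dm_def bdp_def pt_def intro!: sum.cong)
    qed
  qed
qed

lemma bit_ofbool: "of_bool P + of_bool Q = (of_bool (\<not> P) + of_bool (\<not> Q) :: bit)"
  by (cases P; cases Q) (simp_all add: one_add_one)

lemma sum_delta_cond:
  assumes "finite W" "a \<in> W"
  shows "(\<Sum>v\<in>W. if a = v \<and> v \<notin> K then (1::bit) else 0) = of_bool (a \<notin> K)"
proof -
  have "(\<Sum>v\<in>W. if a = v \<and> v \<notin> K then (1::bit) else 0) = (\<Sum>v\<in>W. if a = v then of_bool (a \<notin> K) else 0)"
    by (rule sum.cong) auto
  thus ?thesis using assms by (simp add: sum.delta)
qed

lemma edge_sum:
  assumes W: "finite W" "a \<in> W" "b \<in> W"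
  shows "(\<Sum>v\<in>W. if v \<in> K then 0 else (of_bool (a = v) + of_bool (b = v) :: bit)) =
         of_bool (a \<notin> K) + of_bool (b \<notin> K)"
proof -
  have "(\<Sum>v\<in>W. if v \<in> K then 0 else (of_bool (a = v) + of_bool (b = v) :: bit)) =
        (\<Sum>v\<in>W. (if a = v \<and> v \<notin> K then 1 else 0)) + (\<Sum>v\<in>W. (if b = v \<and> v \<notin> K then 1 else 0))"
    unfolding sum.distrib[symmetric] by (intro sum.cong) auto
  also have "\<dots> = of_bool (a \<notin> K) + of_bool (b \<notin> K)"
    using W sum_delta_cond[of W a K] sum_delta_cond[of W b K] by simp
  finally show ?thesis .
qed

lemma bdp_None:
  assumes F: "finite F" and W: "finite W"
    and ends: "\<And>e. e \<in> F \<Longrightarrow> fst (ends G e) \<in> W \<and> snd (ends G e) \<in> W"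
  shows "bdp G F K c None = (\<Sum>v\<in>W. Dm G F K c (Some v))"
proof -
  have "(\<Sum>v\<in>W. Dm G F K c (Some v)) =
      (\<Sum>v\<in>W. \<Sum>e\<in>F. c e * (if v \<in> K then 0 else (of_bool (fst (ends G e) = v) + of_bool (snd (ends G e) = v))))"
    unfolding Dm_def cutS_def bdp_def pt_def by (intro sum.cong refl) (auto simp: inj_image_mem_iff[OF inj_Some])
  also have "\<dots> = (\<Sum>e\<in>F. c e * (\<Sum>v\<in>W. (if v \<in> K then 0 else (of_bool (fst (ends G e) = v) + of_bool (snd (ends G e) = v)))))"
    by (subst sum.swap) (simp add: sum_distrib_left)
  also have "\<dots> = (\<Sum>e\<in>F. c e * (of_bool (fst (ends G e) \<notin> K) + of_bool (snd (ends G e) \<notin> K)))"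
    using edge_sum[OF W] ends by (auto intro!: sum.cong)
  also have "\<dots> = bdp G F K c None"
  proof -
    have edge: "of_bool (pt K (fst (ends G e)) = None) + of_bool (pt K (snd (ends G e)) = None) =
       (of_bool (fst (ends G e) \<notin> K) + of_bool (snd (ends G e) \<notin> K) :: bit)" for e
      by (cases "fst (ends G e) \<in> K"; cases "snd (ends G e) \<in> K") (simp_all add: pt_def one_add_one)
    show ?thesis unfolding bdp_def using edge by simp
  qed
  finally show ?thesis by simp
qed

lemma bdp_zero_iff:
  assumes F: "finite F" and W: "finite W"
    and ends: "\<And>e. e \<in> F \<Longrightarrow> fst (ends G e) \<in> W \<and> snd (ends G e) \<in> W"
  shows "bdp G F K c = 0 \<longleftrightarrow> Dm G F K c = 0"
proof
  assume "bdp G F K c = 0"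
  thus "Dm G F K c = 0" using cutNone[of G F K c] by (simp add: cutS_def zero_fun_def)
next
  assume D: "Dm G F K c = 0"
  hence N: "bdp G F K c None = 0" using bdp_None[OF F W ends] by simp
  show "bdp G F K c = 0"
  proof
    fix x show "bdp G F K c x = 0 x"
    proof (cases x)
      case None thus ?thesis using N by simp
    next
      case (Some v)
      have "cutS {None} (bdp G F K c) (Some v) = 0" using D cutNone[of G F K c] by simp
      thus ?thesis using Some by (simp add: cutS_def)
    qed
  qed
qed

lemma bdp_img_Cf:
  assumes ends: "\<And>e. e \<in> F \<Longrightarrow> fst (ends G e) \<in> W \<and> snd (ends G e) \<in> W"
  shows "bdp G F K c \<in> Cf (insert None (Some ` W))"
  unfolding Cf_def bdp_def using ends
  by (auto intro!: sum.neutral simp: pt_def)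

lemma dim_bdp:
  assumes F: "finite F" and W: "finite W"
    and ends: "\<And>e. e \<in> F \<Longrightarrow> fst (ends G e) \<in> W \<and> snd (ends G e) \<in> W"
  shows "cs.dim (bdp G F K ` Cf F) = PP G F K"
proof -
  let ?S = "bdp G F K ` Cf F"
  have S: "cs.subspace ?S" by (rule subspace_image[OF lin_bdp subspace_Cf])
  have fin: "?S \<subseteq> cs.span (dl ` (insert None (Some ` W)))"
    using bdp_img_Cf[OF ends] Cf_span[of "insert None (Some ` W)"] W by auto
  have "cs.dim (cutS {None} ` ?S) = cs.dim ?S"
  proof (rule dim_inj[OF linear_cutS S _ fin])
    show "finite (dl ` (insert None (Some ` W)))" using W by simp
    fix x assume "x \<in> ?S" "cutS {None} x = 0"
    then obtain c where c: "x = bdp G F K c" "Dm G F K c = 0" using cutNone[of G F K] by auto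
    thus "x = 0" using bdp_zero_iff[OF F W ends] by simp
  qed
  moreover have "cutS {None} ` ?S = Dm G F K ` Cf F"
    unfolding image_image cutNone by simp
  ultimately show ?thesis by (simp add: PP_def)
qed

lemma ker_dim:
  assumes F: "finite F"
  shows "cs.dim {c \<in> Cf F. Dm G F K c = 0} + PP G F K = card F"
proof -
  have "cs.dim (Cf F) = cs.dim (Dm G F K ` Cf F) + cs.dim {c \<in> Cf F. Dm G F K c = 0}"
    by (rule rank_nullity[OF lin_Dm subspace_Cf _ equalityD1[OF Cf_span[OF F]]]) (simp add: F)
  thus ?thesis using dim_Cf[OF F] by (simp add: PP_def)
qed

lemma fin_cellsE: "filtered_graph G \<Longrightarrow> finite (cellsE G s)"
  by (simp add: cellsE_def fin_subE)

lemma fin_cellsV: "filtered_graph G \<Longrightarrow> finite (cellsV G s)"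
  by (simp add: cellsV_def fin_subV)

lemma ends_cellsE:
  assumes G: "filtered_graph G" and e: "e \<in> cellsE G s"
  shows "fst (ends G e) \<in> subV G (plev G s) \<and> snd (ends G e) \<in> subV G (plev G s)"
  using e ends_sub[OF G] by (auto simp: cellsE_def)

lemma cellsE_colE: "cellsE G s \<inter> colE G s = {}"
  by (auto simp: cellsE_def)

lemma comp1_eq:
  assumes "s \<le> t" "c \<in> C1 G s"
  shows "comp1 G s t c = cutS (colE G t) c"
  using assms
proof (induction t)
  case 0
  thus ?case by (simp add: cutS_def colE_def)
next
  case (Suc t)
  show ?case
  proof (cases "Suc t \<le> s")
    case True
    hence "s = Suc t" using Suc by simp
    thus ?thesis using Suc.prems cellsE_colE[of G s]
      by (auto simp: cutS_def C1_def fun_eq_iff)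
  next
    case False
    hence "s \<le> t" by simp
    hence "comp1 G s t c = cutS (colE G t) c" using Suc by simp
    thus ?thesis using False colE_mono[of t "Suc t" G]
      by (auto simp: step1_def cutS_def fun_eq_iff)
  qed
qed

lemma Z1_eq:
  assumes G: "filtered_graph G"
  shows "Z1 G s = {c \<in> Cf (cellsE G s). Dm G (cellsE G s) (colV G s) c = 0}"
  unfolding Z1_def C1_def bd_eq Cf_def[symmetric]
  using bdp_zero_iff[OF fin_cellsE[OF G] fin_subV[OF G] ends_cellsE[OF G]] by auto

lemma hrank1:
  assumes G: "filtered_graph G" and st: "s \<le> t"
  shows "int (hrank G 1 s t) =
     (int (card (cellsE G s)) - int (PP G (cellsE G s) (colV G s)))
     - (int (card (cellsE G s \<inter> colE G t)) - int (PP G (cellsE G s \<inter> colE G t) (colV G s)))"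
proof -
  define F where "F = cellsE G s"
  define K where "K = colV G s"
  define X where "X = colE G t"
  have F: "finite F" using fin_cellsE[OF G] F_def by simp
  define Z where "Z = {c \<in> Cf F. Dm G F K c = 0}"
  have Z1: "Z1 G s = Z" using Z1_eq[OF G] F_def K_def Z_def by simp
  have ZC: "Z \<subseteq> C1 G s" using Z_def F_def by (auto simp: C1_def Cf_def)
  have img: "comp1 G s t ` Z1 G s = cutS X ` Z"
  proof -
    have "\<And>c. c \<in> Z1 G s \<Longrightarrow> comp1 G s t c = cutS X c" using comp1_eq[OF st] ZC Z1 X_def by auto
    thus ?thesis using Z1 by (simp cong: image_cong)
  qed
  have Zsub: "cs.subspace Z" unfolding Z_def by (rule subspace_kernel[OF lin_Dm subspace_Cf])
  have Isub: "cs.subspace (cutS X ` Z)" by (rule subspace_image[OF linear_cutS Zsub])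
  have "chspan (comp1 G s t ` Z1 G s \<union> {0}) = cutS X ` Z"
    unfolding img chspan_eq using Isub cs.span_eq_iff[THEN iffD2, OF Isub] by simp
  hence h: "hrank G 1 s t = cs.dim (cutS X ` Z)"
    by (simp add: hrank_def chdim_eq dim_zero)
  have Zfin: "Z \<subseteq> cs.span (dl ` F)" using Cf_span[OF F] Z_def by auto
  have rn: "cs.dim Z = cs.dim (cutS X ` Z) + cs.dim {c \<in> Z. cutS X c = 0}"
    by (rule rank_nullity[OF linear_cutS Zsub _ Zfin]) (simp add: F)
  have FX: "finite (F \<inter> X)" using F by simp
  have ker: "{c \<in> Z. cutS X c = 0} = {c \<in> Cf (F \<inter> X). Dm G (F \<inter> X) K c = 0}"
  proof
    show "{c \<in> Z. cutS X c = 0} \<subseteq> {c \<in> Cf (F \<inter> X). Dm G (F \<inter> X) K c = 0}"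
    proof
      fix c assume c: "c \<in> {c \<in> Z. cutS X c = 0}"
      have cf: "c \<in> Cf (F \<inter> X)" using c unfolding Z_def Cf_def cutS_def
        by (auto simp: fun_eq_iff split: if_splits)
      have "Dm G F K c = Dm G (F \<inter> X) K c" using Dm_restrict[OF F _ cf] by auto
      thus "c \<in> {c \<in> Cf (F \<inter> X). Dm G (F \<inter> X) K c = 0}" using c cf Z_def by auto
    qed
    show "{c \<in> Cf (F \<inter> X). Dm G (F \<inter> X) K c = 0} \<subseteq> {c \<in> Z. cutS X c = 0}"
    proof
      fix c assume c: "c \<in> {c \<in> Cf (F \<inter> X). Dm G (F \<inter> X) K c = 0}"
      have cf: "c \<in> Cf F" using c Cf_mono[of "F \<inter> X" F] by auto
      have "Dm G F K c = Dm G (F \<inter> X) K c" using Dm_restrict[OF F _, of "F \<inter> X" c G K] c by auto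
      moreover have "cutS X c = 0" using c by (auto simp: Cf_def cutS_def fun_eq_iff)
      ultimately show "c \<in> {c \<in> Z. cutS X c = 0}" using c cf Z_def by auto
    qed
  qed
  have k1: "cs.dim Z + PP G F K = card F" using ker_dim[OF F] Z_def by simp
  have k2: "cs.dim {c \<in> Z. cutS X c = 0} + PP G (F \<inter> X) K = card (F \<inter> X)"
    using ker_dim[OF FX] ker by simp
  show ?thesis using h rn k1 k2 F_def K_def X_def by simp
qed

lemma vmap_pt: "K \<subseteq> K' \<Longrightarrow> vmap K' (pt K v) = pt K' v"
  by (auto simp: vmap_def pt_def)

lemma lin_step0: "Vector_Spaces.linear chscale chscale (step0 G t)"
proof (rule linearI)
  fix x y :: "'a option \<Rightarrow> bit"
  show "step0 G t (x + y) = step0 G t x + step0 G t y"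
    unfolding step0_def fun_eq_iff by (auto simp: sum.distrib[symmetric] intro!: sum.cong)
next
  show "step0 G t 0 = 0" by (simp add: step0_def fun_eq_iff zero_fun_def)
qed

lemma step0_dl:
  assumes G: "filtered_graph G" and y: "y \<in> cellsV G t"
  shows "step0 G t (dl y) = dl (vmap (colV G (Suc t)) y)"
proof
  fix x
  have "step0 G t (dl y) x = (\<Sum>y'\<in>cellsV G t. if y' = y then (if vmap (colV G (Suc t)) y = x then 1 else 0) else 0)"
    unfolding step0_def dl_def by (intro sum.cong refl) auto
  also have "\<dots> = (if vmap (colV G (Suc t)) y = x then 1 else 0)"
    using y fin_cellsV[OF G] by (simp add: sum.delta')
  finally show "step0 G t (dl y) x = dl (vmap (colV G (Suc t)) y) x" by (auto simp: dl_def)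
qed

lemma step0_img:
  assumes G: "filtered_graph G" and A: "A \<subseteq> cellsV G t"
  shows "step0 G t ` Cf A = Cf (vmap (colV G (Suc t)) ` A)"
proof -
  have fA: "finite A" using A fin_cellsV[OF G] finite_subset by blast
  have "step0 G t ` Cf A = step0 G t ` cs.span (dl ` A)" using Cf_span[OF fA] by simp
  also have "\<dots> = cs.span (step0 G t ` dl ` A)" by (rule csp.linear_span_image[OF lin_step0, symmetric])
  also have "step0 G t ` dl ` A = dl ` vmap (colV G (Suc t)) ` A"
    using step0_dl[OF G] A by (force simp: image_image)
  also have "cs.span \<dots> = Cf (vmap (colV G (Suc t)) ` A)" using Cf_span[of "vmap (colV G (Suc t)) ` A"] fA by simp
  finally show ?thesis .
qed

lemma plev_mono: "s \<le> t \<Longrightarrow> plev G s \<le> plev G t"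
  by (simp add: plev_def)

lemma W_mono:
  assumes G: "filtered_graph G" and "s \<le> t"
  shows "subV G (plev G s) \<subseteq> subV G (plev G t)"
  using subV_mono[OF G plev_mono[of s t G, OF assms(2)]] by (simp add: plev_def)

lemma comp0_img:
  assumes G: "filtered_graph G"
  shows "1 \<le> s \<Longrightarrow> s \<le> t \<Longrightarrow> comp0 G s t ` C0 G s = Cf (pt (colV G t) ` subV G (plev G s))"
proof (induction t)
  case 0 thus ?case by simp
next
  case (Suc t)
  show ?case
  proof (cases "Suc t \<le> s")
    case True
    hence "s = Suc t" using Suc by simp
    thus ?thesis by (simp add: C0_def Cf_def cellsV_def)
  next
    case False
    hence st: "s \<le> t" by simp
    have IH: "comp0 G s t ` C0 G s = Cf (pt (colV G t) ` subV G (plev G s))" using Suc st by simp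
    have sub: "pt (colV G t) ` subV G (plev G s) \<subseteq> cellsV G t"
      using W_mono[OF G st] by (auto simp: cellsV_def)
    have "comp0 G s (Suc t) ` C0 G s = step0 G t ` comp0 G s t ` C0 G s"
      using False by (simp add: image_comp)
    also have "\<dots> = Cf (vmap (colV G (Suc t)) ` pt (colV G t) ` subV G (plev G s))"
      using IH step0_img[OF G sub] by simp
    also have "vmap (colV G (Suc t)) ` pt (colV G t) ` subV G (plev G s) = pt (colV G (Suc t)) ` subV G (plev G s)"
      using vmap_pt[OF colV_mono[of t "Suc t" G]] by (simp add: image_image)
    finally show ?thesis .
  qed
qed

lemma bdp_Some: "bdp G F K c (Some v) = (if v \<in> K then 0 else bdp G F {} c (Some v))"
  using fun_cong[OF cutNone[of G F K c], of "Some v"]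
  by (simp add: cutS_def Dm_def inj_image_mem_iff[OF inj_Some])

lemma cut_bdp:
  assumes KW: "K = {} \<or> K \<inter> W \<noteq> {}"
  shows "cutS (pt K ` W) (bdp G F K c) = Dm G F (K \<union> W) c"
proof
  fix x show "cutS (pt K ` W) (bdp G F K c) x = Dm G F (K \<union> W) c x"
  proof (cases x)
    case None
    have "bdp G F {} c None = 0" by (simp add: bdp_def pt_def)
    moreover have "K = {} \<Longrightarrow> bdp G F K c None = 0" by (simp add: bdp_def pt_def)
    moreover have "K \<noteq> {} \<Longrightarrow> None \<in> pt K ` W" using KW by (auto simp: pt_def image_iff)
    ultimately show ?thesis using None by (auto simp: cutS_def Dm_def)
  next
    case (Some v)
    have "(Some v \<in> pt K ` W) = (v \<in> W \<and> v \<notin> K)" by (auto simp: pt_def image_iff)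
    thus ?thesis using Some bdp_Some[of G F K c v]
      by (auto simp: cutS_def Dm_def inj_image_mem_iff[OF inj_Some])
  qed
qed

lemma dim_sum_Cf_ge:
  assumes A: "finite A" and B: "cs.subspace B" and W: "finite W" and BW: "B \<subseteq> Cf W"
  shows "cs.dim B \<le> card A + cs.dim (cutS A ` B)"
proof -
  have Bfin: "B \<subseteq> cs.span (dl ` W)" using BW Cf_span[OF W] by simp
  have rn: "cs.dim B = cs.dim (cutS A ` B) + cs.dim {x\<in>B. cutS A x = 0}"
    by (rule rank_nullity[OF linear_cutS B _ Bfin]) (simp add: W)
  have "{x\<in>B. cutS A x = 0} \<subseteq> cs.span (dl ` A)"
    using Cf_span[OF A] by (auto simp: Cf_def cutS_def fun_eq_iff split: if_splits)
  hence "cs.dim {x\<in>B. cutS A x = 0} \<le> card (dl ` A)" by (rule cs.dim_le_card) (simp add: A)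
  moreover have "card (dl ` A) \<le> card A" using A card_image_le by blast
  ultimately show ?thesis using rn by simp
qed

lemma hrank0:
  assumes G: "filtered_graph G" and s1: "1 \<le> s" and st: "s \<le> t"
    and KW: "colV G t = {} \<or> colV G t \<inter> subV G (plev G s) \<noteq> {}"
  shows "int (hrank G 0 s t) =
     int (card (pt (colV G t) ` subV G (plev G s)))
     + int (PP G (cellsE G t) (colV G t \<union> subV G (plev G s))) - int (PP G (cellsE G t) (colV G t))"
proof -
  define A where "A = pt (colV G t) ` subV G (plev G s)"
  define F where "F = cellsE G t"
  define K where "K = colV G t"
  define Ws where "Ws = subV G (plev G s)"
  define Wt where "Wt = subV G (plev G t)"
  have F: "finite F" using fin_cellsE[OF G] F_def by simp
  have A: "finite A" using fin_subV[OF G] A_def by simp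
  have Wt: "finite Wt" using fin_subV[OF G] Wt_def by simp
  have ends: "\<And>e. e \<in> F \<Longrightarrow> fst (ends G e) \<in> Wt \<and> snd (ends G e) \<in> Wt"
    using ends_cellsE[OF G] F_def Wt_def by simp
  define B where "B = bdp G F K ` Cf F"
  have B0: "B0 G t = B" unfolding B0_def bd_eq C1_def B_def F_def K_def Cf_def ..
  have C0: "comp0 G s t ` C0 G s = Cf A" using comp0_img[OF G s1 st] A_def by simp
  have Bsub: "cs.subspace B" unfolding B_def by (rule subspace_image[OF lin_bdp subspace_Cf])
  have BW: "B \<subseteq> Cf (insert None (Some ` Wt))" using bdp_img_Cf[OF ends] B_def by auto
  have Wf: "finite (insert None (Some ` Wt))" using Wt by simp
  have d1: "cs.dim (cs.span (Cf A \<union> B)) = card A + cs.dim (cutS A ` B)"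
    by (rule dim_sum_Cf[OF A Bsub Wf BW])
  have d2: "cs.dim B \<le> card A + cs.dim (cutS A ` B)"
    by (rule dim_sum_Cf_ge[OF A Bsub Wf BW])
  have "cutS A ` B = Dm G F (K \<union> Ws) ` Cf F"
    unfolding B_def image_image A_def K_def Ws_def using cut_bdp[OF KW, where G=G and F=F] by simp
  hence d3: "cs.dim (cutS A ` B) = PP G F (K \<union> Ws)" by (simp add: PP_def)
  have d4: "cs.dim B = PP G F K" using dim_bdp[OF F Wt ends] B_def by simp
  have "hrank G 0 s t = cs.dim (cs.span (Cf A \<union> B)) - cs.dim B"
    by (simp add: hrank_def C0 B0 chdim_eq chspan_eq)
  thus ?thesis using d1 d2 d3 d4 A_def F_def K_def Ws_def by simp
qed

context
  fixes G :: "('v, 'e) fgraph"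
  assumes G: "filtered_graph G" and n1: "1 \<le> nsteps G"
begin

abbreviation "nn \<equiv> nsteps G"

lemma low_stage:
  assumes "s \<le> nn"
  shows "plev G s = s" "colV G s = {}" "colE G s = {}" "cellsE G s = subE G s"
  using assms by (auto simp: plev_def colV_low colE_low cellsE_def)

lemma high_stage:
  assumes "i \<le> nn"
  shows "plev G (nn + i) = nn" "colV G (nn + i) = subV G i" "colE G (nn + i) = subE G i"
    "cellsE G (nn + i) = subE G nn - subE G i"
  using assms colV_high[OF G assms] colE_high[OF G assms] by (auto simp: plev_def cellsE_def)

lemma E_int: "s \<le> nn \<Longrightarrow> j \<le> nn \<Longrightarrow> subE G s \<inter> subE G j = subE G (min s j)"
  using subE_mono[OF G, of s j] subE_mono[OF G, of j s] by (auto simp: min_def)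

lemma V_un: "s \<le> nn \<Longrightarrow> j \<le> nn \<Longrightarrow> subV G j \<union> subV G s = subV G (max s j)"
  using subV_mono[OF G, of s j] subV_mono[OF G, of j s] by (auto simp: max_def)

lemma PP_dropE:
  assumes "i \<le> j" "j \<le> nn" "subV G i \<subseteq> K"
  shows "PP G (subE G j - subE G i) K = PP G (subE G j) K"
proof -
  have "\<And>e. e \<in> subE G i \<Longrightarrow> fst (ends G e) \<in> K \<and> snd (ends G e) \<in> K"
    using ends_sub[OF G, of _ i] assms(3) by blast
  from PP_drop[OF fin_subE[OF G], of "subE G i" G K j, OF this] show ?thesis by simp
qed

lemma PP_self: "i \<le> nn \<Longrightarrow> PP G (subE G i) (subV G i) = 0"
  using PP_dropE[of i i "subV G i"] PP_empty[of G "subV G i"] by simp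

lemma card_Ediff: "i \<le> j \<Longrightarrow> j \<le> nn \<Longrightarrow> int (card (subE G j - subE G i)) = int (card (subE G j)) - int (card (subE G i))"
  using subE_mono[OF G, of i j] fin_subE[OF G] by (simp add: card_Diff_subset of_nat_diff card_mono)

lemma card_Vdiff: "j \<le> s \<Longrightarrow> s \<le> nn \<Longrightarrow> int (card (subV G s - subV G j)) = int (card (subV G s)) - int (card (subV G j))"
  using subV_mono[OF G, of j s] fin_subV[OF G] by (simp add: card_Diff_subset of_nat_diff card_mono)

lemma V1_sub: "1 \<le> i \<Longrightarrow> i \<le> nn \<Longrightarrow> subV G 1 \<subseteq> subV G i"
  using subV_mono[OF G] by simp

lemma card_pt:
  assumes "1 \<le> j" "j \<le> nn" "1 \<le> s" "s \<le> nn"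
  shows "int (card (pt (subV G j) ` subV G s)) = 1 + (if s \<le> j then 0 else int (card (subV G s)) - int (card (subV G j)))"
proof -
  have ne: "subV G j \<inter> subV G s \<noteq> {}" using V1_ne[OF G n1] V1_sub assms by blast
  have eq: "pt (subV G j) ` subV G s = insert None (Some ` (subV G s - subV G j))"
    using ne by (auto simp: pt_def image_iff)
  have "card (pt (subV G j) ` subV G s) = Suc (card (subV G s - subV G j))"
    unfolding eq using fin_subV[OF G] by (simp add: card_image)
  moreover have "s \<le> j \<Longrightarrow> card (subV G s - subV G j) = 0"
  proof -
    assume "s \<le> j"
    hence "subV G s - subV G j = {}" using subV_mono[OF G, of s j] assms by blast
    thus ?thesis by (metis card.empty)
  qed
  ultimately show ?thesis using card_Vdiff[of j s] assms by auto
qed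

definition "ee s = int (card (subE G s))"
definition "vv s = int (card (subV G s))"
definition "pp s = int (PP G (subE G s) {})"
definition "uu i j = int (PP G (subE G j) (subV G i))"

lemma R1a: "1 \<le> s \<Longrightarrow> s \<le> t \<Longrightarrow> t \<le> nn \<Longrightarrow> int (hrank G 1 s t) = ee s - pp s"
  using hrank1[OF G, of s t] low_stage[of s] low_stage[of t] PP_empty
  by (simp add: ee_def pp_def)

lemma R1b: "1 \<le> s \<Longrightarrow> s \<le> nn \<Longrightarrow> j \<le> nn \<Longrightarrow>
   int (hrank G 1 s (nn + j)) = (ee s - pp s) - (ee (min s j) - pp (min s j))"
  using hrank1[OF G, of s "nn + j"] low_stage[of s] high_stage[of j] E_int[of s j]
  by (simp add: ee_def pp_def)

lemma R1c: "i \<le> j \<Longrightarrow> j \<le> nn \<Longrightarrow>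
   int (hrank G 1 (nn + i) (nn + j)) = ee nn - uu i nn - ee j + uu i j"
proof -
  assume ij: "i \<le> j" "j \<le> nn"
  have "(subE G nn - subE G i) \<inter> subE G j = subE G j - subE G i"
    using subE_mono[OF G, of j nn] ij by auto
  moreover have "PP G (subE G nn - subE G i) (subV G i) = PP G (subE G nn) (subV G i)"
    using PP_dropE[of i nn] ij by simp
  moreover have "PP G (subE G j - subE G i) (subV G i) = PP G (subE G j) (subV G i)"
    using PP_dropE[of i j] ij by simp
  ultimately show ?thesis
    using hrank1[OF G, of "nn + i" "nn + j"] high_stage[of i] high_stage[of j] ij
      card_Ediff[of i nn] card_Ediff[of i j]
    by (simp add: ee_def uu_def)
qed

lemma R0a: "1 \<le> s \<Longrightarrow> s \<le> t \<Longrightarrow> t \<le> nn \<Longrightarrow> int (hrank G 0 s t) = vv s + uu s t - pp t"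
  using hrank0[OF G, of s t] low_stage[of s] low_stage[of t]
  by (simp add: vv_def uu_def pp_def card_image pt_def[abs_def])

lemma R0b: "1 \<le> s \<Longrightarrow> s \<le> nn \<Longrightarrow> 1 \<le> j \<Longrightarrow> j \<le> nn \<Longrightarrow>
   int (hrank G 0 s (nn + j)) = (if s \<le> j then 1 else 1 + vv s - vv j + uu s nn - uu j nn)"
proof -
  assume a: "1 \<le> s" "s \<le> nn" "1 \<le> j" "j \<le> nn"
  note hs = high_stage[OF a(4)] and ls = low_stage[OF a(2)]
  have KW: "colV G (nn + j) = {} \<or> colV G (nn + j) \<inter> subV G (plev G s) \<noteq> {}"
    unfolding hs ls using a V1_ne[OF G n1] V1_sub[of j] V1_sub[of s] by blast
  have st: "s \<le> nn + j" using a by simp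
  have h: "int (hrank G 0 s (nn + j)) = int (card (pt (subV G j) ` subV G s))
     + int (PP G (subE G nn - subE G j) (subV G j \<union> subV G s)) - int (PP G (subE G nn - subE G j) (subV G j))"
    using hrank0[OF G a(1) st KW] by (simp only: hs ls)
  have p1: "PP G (subE G nn - subE G j) (subV G j \<union> subV G s) = PP G (subE G nn) (subV G (max s j))"
    using PP_dropE[OF a(4) order_refl, of "subV G j \<union> subV G s"] V_un[OF a(2) a(4)]
      subV_mono[OF G, of j "max s j"] a by simp
  have p2: "PP G (subE G nn - subE G j) (subV G j) = PP G (subE G nn) (subV G j)"
    using PP_dropE[OF a(4) order_refl, of "subV G j"] by simp
  have c: "int (card (pt (subV G j) ` subV G s)) = 1 + (if s \<le> j then 0 else vv s - vv j)"
    using card_pt[OF a(3,4,1,2)] by (simp add: vv_def)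
  show ?thesis
  proof (cases "s \<le> j")
    case True
    thus ?thesis using h p1 p2 c by (simp add: max_def)
  next
    case False
    thus ?thesis using h p1 p2 c by (simp add: max_def uu_def)
  qed
qed

lemma R0c: "1 \<le> i \<Longrightarrow> i \<le> j \<Longrightarrow> j \<le> nn \<Longrightarrow>
   int (hrank G 0 (nn + i) (nn + j)) = 1 + vv nn - vv j - uu j nn"
proof -
  assume a: "1 \<le> i" "i \<le> j" "j \<le> nn"
  have i: "i \<le> nn" using a by simp
  note hj = high_stage[OF a(3)] and hi = high_stage[OF i]
  have KW: "colV G (nn + j) = {} \<or> colV G (nn + j) \<inter> subV G (plev G (nn + i)) \<noteq> {}"
  proof -
    have "subV G 1 \<subseteq> subV G j \<inter> subV G nn" using V1_sub[of j] V1_sub[of nn] a n1 by auto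
    hence "subV G j \<inter> subV G nn \<noteq> {}" using V1_ne[OF G n1] by blast
    thus ?thesis by (simp add: hj hi)
  qed
  have st: "nn + i \<le> nn + j" "1 \<le> nn + i" using a by simp_all
  have h: "int (hrank G 0 (nn + i) (nn + j)) = int (card (pt (subV G j) ` subV G nn))
     + int (PP G (subE G nn - subE G j) (subV G j \<union> subV G nn)) - int (PP G (subE G nn - subE G j) (subV G j))"
    using hrank0[OF G st(2) st(1) KW] by (simp only: hj hi)
  have p1: "PP G (subE G nn - subE G j) (subV G j \<union> subV G nn) = 0"
  proof -
    have "subV G j \<union> subV G nn = subV G nn" using subV_mono[OF G a(3) order_refl] by blast
    thus ?thesis using PP_dropE[OF a(3) order_refl, of "subV G nn"] PP_self[OF order_refl] subV_mono[OF G a(3) order_refl] by simp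
  qed
  have p2: "PP G (subE G nn - subE G j) (subV G j) = PP G (subE G nn) (subV G j)"
    using PP_dropE[OF a(3) order_refl, of "subV G j"] by simp
  have c: "int (card (pt (subV G j) ` subV G nn)) = 1 + (if nn \<le> j then 0 else vv nn - vv j)"
    using card_pt[OF _ a(3) n1 order_refl] a by (simp add: vv_def)
  have "nn \<le> j \<Longrightarrow> j = nn" using a by simp
  thus ?thesis using h p1 p2 c by (cases "nn \<le> j") (auto simp: uu_def)
qed

end

lemma dim_lt:
  assumes B: "cs.subspace B" and S: "cs.subspace S" and BS: "B \<subseteq> S" and x: "x \<in> S" "x \<notin> B"
    and T: "finite T" and ST: "S \<subseteq> cs.span T"
  shows "cs.dim B < cs.dim S"
proof -
  obtain BB where BB: "BB \<subseteq> B" "cs.independent BB" "B \<subseteq> cs.span BB" "card BB = cs.dim B"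
    using cs.basis_exists by blast
  have spBB: "cs.span BB = B" using cs.span_subspace[OF BB(1) BB(3) B] .
  have ind: "cs.independent (insert x BB)" using cs.independent_insertI[of x BB] BB(2) spBB x(2) by simp
  have fBB: "finite BB" using cs.independent_span_bound[OF T BB(2)] BB(1) BS ST by auto
  obtain TS where TS: "TS \<subseteq> S" "cs.independent TS" "S \<subseteq> cs.span TS" "card TS = cs.dim S"
    using cs.basis_exists by blast
  have fTS: "finite TS" using cs.independent_span_bound[OF T TS(2)] TS(1) ST by auto
  have "insert x BB \<subseteq> cs.span TS" using x(1) BB(1) BS TS(3) by auto
  hence "card (insert x BB) \<le> card TS" using cs.independent_span_bound[OF fTS ind] by simp
  moreover have "x \<notin> BB" using x(2) BB(1) by blast
  hence "card (insert x BB) = Suc (card BB)" using fBB by simp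
  ultimately show ?thesis using BB(4) TS(4) by simp
qed

lemma hrank0_pos:
  assumes G: "filtered_graph G" and n1: "1 \<le> nsteps G"
  shows "1 \<le> hrank G 0 1 (nsteps G)"
proof -
  let ?n = "nsteps G"
  define A where "A = Some ` subV G 1"
  define F where "F = subE G ?n"
  define W where "W = subV G ?n"
  have ls1: "plev G 1 = 1" "colV G ?n = {}" "cellsE G ?n = F"
    using low_stage[OF G n1, of 1] low_stage[OF G n1, of ?n] n1 F_def by auto
  have F: "finite F" using fin_subE[OF G] F_def by simp
  have W: "finite W" using fin_subV[OF G] W_def by simp
  have A: "finite A" using fin_subV[OF G] A_def by simp
  have ends: "\<And>e. e \<in> F \<Longrightarrow> fst (ends G e) \<in> W \<and> snd (ends G e) \<in> W"
    using ends_sub[OF G] F_def W_def by auto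
  define B where "B = bdp G F {} ` Cf F"
  have B0: "B0 G ?n = B" unfolding B0_def bd_eq C1_def B_def ls1 Cf_def ..
  have C0: "comp0 G 1 ?n ` C0 G 1 = Cf A"
    using comp0_img[OF G _ n1] ls1 A_def by (simp add: pt_def[abs_def])
  have Bsub: "cs.subspace B" unfolding B_def by (rule subspace_image[OF lin_bdp subspace_Cf])
  define S where "S = cs.span (Cf A \<union> B)"
  have BW: "B \<subseteq> Cf (insert None (Some ` W))" using bdp_img_Cf[OF ends] B_def by auto
  have ST: "S \<subseteq> cs.span (dl ` (A \<union> insert None (Some ` W)))"
    unfolding S_def
  proof (rule cs.span_minimal)
    show "cs.subspace (cs.span (dl ` (A \<union> insert None (Some ` W))))" by simp
    define X where "X = A \<union> insert None (Some ` W)"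
    have X: "Cf A \<union> B \<subseteq> Cf X"
    proof (rule Un_least)
      show "Cf A \<subseteq> Cf X" by (rule Cf_mono) (auto simp: X_def)
      have "Cf (insert None (Some ` W)) \<subseteq> Cf X" by (rule Cf_mono) (auto simp: X_def)
      thus "B \<subseteq> Cf X" using BW by (rule subset_trans[rotated])
    qed
    have fin: "finite X" using A W X_def by simp
    show "Cf A \<union> B \<subseteq> cs.span (dl ` (A \<union> insert None (Some ` W)))"
      unfolding X_def[symmetric] Cf_span[OF fin, symmetric] by (rule X)
  qed
  obtain v where v: "v \<in> subV G 1" using V1_ne[OF G n1] by auto
  have vW: "v \<in> W" using subV_mono[OF G n1 order_refl] v W_def by blast
  have xS: "dl (Some v) \<in> S" unfolding S_def using v A_def dl_in_Cf[of "Some v" A]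
    by (auto intro: cs.span_base)
  have sum0: "(\<Sum>w\<in>W. y (Some w)) = 0" if "y \<in> B" for y
  proof -
    obtain c where c: "y = bdp G F {} c" using \<open>y \<in> B\<close> B_def by auto
    have "bdp G F {} c None = 0" by (simp add: bdp_def pt_def)
    moreover have "Dm G F {} c = bdp G F {} c" by (simp add: Dm_def cutS_def fun_eq_iff)
    ultimately show ?thesis using bdp_None[OF F W ends, of "{}" c] c by simp
  qed
  have "(\<Sum>w\<in>W. dl (Some v) (Some w)) = 1"
    using vW W by (simp add: dl_def)
  hence xB: "dl (Some v) \<notin> B" using sum0[of "dl (Some v)"] by (metis zero_neq_one)
  have "cs.dim B < cs.dim S"
    by (rule dim_lt[OF Bsub _ _ xS xB _ ST]) (auto simp: S_def A W intro: cs.span_base)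
  moreover have "hrank G 0 1 ?n = cs.dim S - cs.dim B"
    unfolding hrank_def C0 B0 chdim_eq chspan_eq S_def by simp
  ultimately show ?thesis by simp
qed

lemma pm_eval:
  assumes g: "\<And>i j. i \<le> j \<Longrightarrow> j \<le> m + 1 \<Longrightarrow> i \<le> m \<Longrightarrow>
     (if 1 \<le> i \<and> i \<le> j \<and> j \<le> m then int (r i j) else 0) = g i j"
  shows "pers_mult r m b d = (if 1 \<le> b \<and> b < d \<and> d \<le> m + 1
     then nat (g b (d - 1) - g (b - 1) (d - 1) - g b d + g (b - 1) d) else 0)"
proof (cases "1 \<le> b \<and> b < d \<and> d \<le> m + 1")
  case True
  define r' where "r' = (\<lambda>i j. if 1 \<le> i \<and> i \<le> j \<and> j \<le> m then int (r i j) else 0)"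
  have P: "pers_mult r m b d = nat (r' b (d - 1) - r' (b - 1) (d - 1) - r' b d + r' (b - 1) d)"
    unfolding pers_mult_def Let_def r'_def using True by (simp only: simp_thms if_True)
  moreover have "r' b (d - 1) = g b (d - 1)" unfolding r'_def by (rule g) (use True in auto)
  moreover have "r' (b - 1) (d - 1) = g (b - 1) (d - 1)" unfolding r'_def by (rule g) (use True in auto)
  moreover have "r' b d = g b d" unfolding r'_def by (rule g) (use True in auto)
  moreover have "r' (b - 1) d = g (b - 1) d" unfolding r'_def by (rule g) (use True in auto)
  ultimately show ?thesis using True P by (simp only: simp_thms if_True)
next
  case False thus ?thesis unfolding pers_mult_def Let_def by (simp only: if_not_P[OF False] if_False)
qed

lemma pm_low: assumes "d \<le> m" "d \<le> m'" shows "pers_mult r m b d = pers_mult r m' b d"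
proof -
  have c1: "d - 1 \<le> m" "d \<le> m" "d - 1 \<le> m'" "d \<le> m'" "d \<le> m + 1" "d \<le> m' + 1" using assms by auto
  show ?thesis unfolding pers_mult_def Let_def by (simp only: c1 simp_thms)
qed

lemma pm_high: assumes "m + 1 < d" shows "pers_mult r m b d = 0"
proof -
  have "\<not> (1 \<le> b \<and> b < d \<and> d \<le> m + 1)" using assms by auto
  thus ?thesis unfolding pers_mult_def Let_def by (rule if_not_P)
qed

lemma pm_zero: "(\<And>i j. r i j = 0) \<Longrightarrow> pers_mult r m b d = 0"
  by (simp add: pers_mult_def Let_def)

lemma hrank_ge2: "2 \<le> k \<Longrightarrow> hrank G k i j = 0"
  by (simp add: hrank_def)

lemma pm_nonpos: assumes "\<not> (1 \<le> b \<and> b < d)" shows "pers_mult r m b d = 0"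
proof -
  have "\<not> (1 \<le> b \<and> b < d \<and> d \<le> m + 1)" using assms by auto
  thus ?thesis unfolding pers_mult_def Let_def by (rule if_not_P)
qed

context
  fixes G :: "('v, 'e) fgraph"
  assumes G: "filtered_graph G" and n1: "1 \<le> nsteps G"
begin

abbreviation "n \<equiv> nsteps G"

definition "zz s = ee G s - pp G s"
definition "cc i j = vv G i + uu G i j - pp G j"

definition "F1 i j = (if i \<le> n then zz i - zz (min i (j - n))
    else ee G n - uu G (i - n) n - ee G (min (j - n) n) + uu G (i - n) (min (j - n) n))"
definition "F0 i j = (if j \<le> n then cc i j else if j - n > n then 0 else if i = 0 then 0
    else if i \<le> n then 1 + vv G i - vv G (min i (j - n)) + uu G i n - uu G (min i (j - n)) n
    else 1 + vv G n - vv G (j - n) - uu G (j - n) n)"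
definition "Fw1 i j = (if j \<le> n then zz i else 0)"
definition "Fw0 i j = (if j \<le> n then cc i j else 0)"

lemmas ee_d = ee_def[OF G n1] and vv_d = vv_def[OF G n1] and pp_d = pp_def[OF G n1] and uu_d = uu_def[OF G n1]

lemma ee0: "ee G 0 = 0" by (simp add: ee_d)
lemma vv0: "vv G 0 = 0" by (simp add: vv_d)
lemma pp0: "pp G 0 = 0" by (simp add: pp_d PP_empty)
lemma uu0: "uu G 0 j = pp G j" by (simp add: uu_d pp_d)
lemma uuii: "i \<le> n \<Longrightarrow> uu G i i = 0" using PP_self[OF G n1] by (simp add: uu_d)
lemma zz0: "zz 0 = 0" by (simp add: zz_def ee0 pp0)
lemma cc0: "cc 0 j = 0" by (simp add: cc_def vv0 uu0)

lemma L_fb1: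
  assumes "i \<le> j" "j \<le> 2 * n + 1" "i \<le> 2 * n"
  shows "(if 1 \<le> i \<and> i \<le> j \<and> j \<le> 2 * n then int (hrank G 1 i j) else 0) = F1 i j"
proof (cases "1 \<le> i \<and> j \<le> 2 * n")
  case False
  hence "i = 0 \<or> j = 2 * n + 1" using assms by auto
  thus ?thesis
  proof
    assume "i = 0" thus ?thesis by (simp add: F1_def zz0)
  next
    assume j: "j = 2 * n + 1"
    have "min (j - n) n = n" "i \<le> n \<Longrightarrow> min i (j - n) = i" using j by auto
    thus ?thesis using j by (auto simp: F1_def)
  qed
next
  case True
  hence i1: "1 \<le> i" and j2: "j \<le> 2 * n" by auto
  have lhs: "(if 1 \<le> i \<and> i \<le> j \<and> j \<le> 2 * n then int (hrank G 1 i j) else 0) = int (hrank G 1 i j)"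
    using True assms by simp
  show ?thesis
  proof (cases "j \<le> n")
    case True
    thus ?thesis using R1a[OF G n1 i1 assms(1) True] lhs assms(1)
      by (simp add: F1_def zz_def zz0[unfolded zz_def])
  next
    case jn: False
    define j' where "j' = j - n"
    have j: "j = n + j'" "j' \<le> n" "1 \<le> j'" using jn j2 j'_def by auto
    show ?thesis
    proof (cases "i \<le> n")
      case True
      show ?thesis using R1b[OF G n1 i1 True j(2)] lhs j True by (simp add: F1_def zz_def)
    next
      case False
      define i' where "i' = i - n"
      have i: "i = n + i'" "i' \<le> j'" using False i'_def assms(1) j by auto
      show ?thesis using R1c[OF G n1 i(2) j(2)] lhs i j False by (simp add: F1_def)
    qed
  qed
qed


lemma L_fb0:
  assumes "i \<le> j" "j \<le> 2 * n + 1" "i \<le> 2 * n"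
  shows "(if 1 \<le> i \<and> i \<le> j \<and> j \<le> 2 * n then int (hrank G 0 i j) else 0) = F0 i j"
proof (cases "1 \<le> i \<and> j \<le> 2 * n")
  case False
  hence "i = 0 \<or> j = 2 * n + 1" using assms by auto
  thus ?thesis
  proof
    assume "i = 0" thus ?thesis by (simp add: F0_def cc0)
  next
    assume j: "j = 2 * n + 1"
    thus ?thesis using n1 by (auto simp: F0_def)
  qed
next
  case True
  hence i1: "1 \<le> i" and j2: "j \<le> 2 * n" by auto
  have lhs: "(if 1 \<le> i \<and> i \<le> j \<and> j \<le> 2 * n then int (hrank G 0 i j) else 0) = int (hrank G 0 i j)"
    using True assms by simp
  show ?thesis
  proof (cases "j \<le> n")
    case True
    thus ?thesis using R0a[OF G n1 i1 assms(1) True] lhs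
      by (simp add: F0_def cc_def)
  next
    case jn: False
    define j' where "j' = j - n"
    have j: "j = n + j'" "j' \<le> n" "1 \<le> j'" using jn j2 j'_def by auto
    show ?thesis
    proof (cases "i \<le> n")
      case True
      show ?thesis
      proof (cases "i \<le> j'")
        case True
        thus ?thesis using R0b[OF G n1 i1 \<open>i \<le> n\<close> j(3) j(2)] lhs j \<open>i \<le> n\<close> i1 jn
          by (simp add: F0_def min_def)
      next
        case False
        thus ?thesis using R0b[OF G n1 i1 \<open>i \<le> n\<close> j(3) j(2)] lhs j \<open>i \<le> n\<close> i1 jn
          by (simp add: F0_def min_def)
      qed
    next
      case False
      define i' where "i' = i - n"
      have i: "i = n + i'" "i' \<le> j'" "1 \<le> i'" using False i'_def assms(1) j by auto
      show ?thesis using R0c[OF G n1 i(3) i(2) j(2)] lhs i j False jn by (simp add: F0_def)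
    qed
  qed
qed

lemma L_fw1:
  assumes "i \<le> j" "j \<le> n + 1" "i \<le> n"
  shows "(if 1 \<le> i \<and> i \<le> j \<and> j \<le> n then int (hrank G 1 i j) else 0) = Fw1 i j"
proof (cases "1 \<le> i \<and> j \<le> n")
  case False
  hence "i = 0 \<or> j = n + 1" using assms by auto
  thus ?thesis by (auto simp: Fw1_def zz0)
next
  case True
  thus ?thesis using R1a[OF G n1, of i j] assms by (simp add: Fw1_def zz_def)
qed

lemma L_fw0:
  assumes "i \<le> j" "j \<le> n + 1" "i \<le> n"
  shows "(if 1 \<le> i \<and> i \<le> j \<and> j \<le> n then int (hrank G 0 i j) else 0) = Fw0 i j"
proof (cases "1 \<le> i \<and> j \<le> n")
  case False
  hence "i = 0 \<or> j = n + 1" using assms by auto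
  thus ?thesis by (auto simp: Fw0_def cc0)
next
  case True
  thus ?thesis using R0a[OF G n1, of i j] assms by (simp add: Fw0_def cc_def)
qed

lemma fb1_eval: "fb_pd G 1 b d = (if 1 \<le> b \<and> b < d \<and> d \<le> 2 * n + 1
     then nat (F1 b (d - 1) - F1 (b - 1) (d - 1) - F1 b d + F1 (b - 1) d) else 0)"
  unfolding fb_pd_def by (rule pm_eval) (rule L_fb1)

lemma fb0_eval: "fb_pd G 0 b d = (if 1 \<le> b \<and> b < d \<and> d \<le> 2 * n + 1
     then nat (F0 b (d - 1) - F0 (b - 1) (d - 1) - F0 b d + F0 (b - 1) d) else 0)"
  unfolding fb_pd_def by (rule pm_eval) (rule L_fb0)

lemma fw1_eval: "fwd_pd G 1 b d = (if 1 \<le> b \<and> b < d \<and> d \<le> n + 1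
     then nat (Fw1 b (d - 1) - Fw1 (b - 1) (d - 1) - Fw1 b d + Fw1 (b - 1) d) else 0)"
  unfolding fwd_pd_def by (rule pm_eval) (rule L_fw1)

lemma fw0_eval: "fwd_pd G 0 b d = (if 1 \<le> b \<and> b < d \<and> d \<le> n + 1
     then nat (Fw0 b (d - 1) - Fw0 (b - 1) (d - 1) - Fw0 b d + Fw0 (b - 1) d) else 0)"
  unfolding fwd_pd_def by (rule pm_eval) (rule L_fw0)

end

context
  fixes G :: "('v, 'e) fgraph"
  assumes G: "filtered_graph G" and n1: "1 \<le> nsteps G"
begin

abbreviation "N \<equiv> nsteps G"

lemmas uu0' = uu0[OF G n1] and uuii' = uuii[OF G n1] and zz0' = zz0[OF G n1] and cc0' = cc0[OF G n1]
lemmas ee_e = ee_def[OF G n1] and vv_e = vv_def[OF G n1] and pp_e = pp_def[OF G n1] and uu_e = uu_def[OF G n1]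
lemmas zz_d = zz_def[OF G n1] and cc_d = cc_def[OF G n1]
lemmas F1_d = F1_def[OF G n1] and F0_d = F0_def[OF G n1] and Fw1_d = Fw1_def[OF G n1] and Fw0_d = Fw0_def[OF G n1]

lemma F1_lo: "i \<le> N \<Longrightarrow> F1 G i j = zz G i - zz G (min i (j - N))"
  by (simp add: F1_d)

lemma F1_hi: "N \<le> i \<Longrightarrow> F1 G i j = ee G N - uu G (i - N) N - ee G (min (j - N) N) + uu G (i - N) (min (j - N) N)"
proof (cases "i \<le> N")
  case True
  assume "N \<le> i"
  hence "i = N" using True by simp
  thus ?thesis using uu0'[of N] uu0'[of "min (j - N) N"] by (simp add: F1_d zz_d min.commute)
next
  case False thus ?thesis by (simp add: F1_d)
qed

lemma zzdiff:
  assumes b: "1 \<le> b"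
  shows "- zz G (min b (d - 1 - N)) + zz G (min (b - 1) (d - 1 - N)) + zz G (min b (d - N)) - zz G (min (b - 1) (d - N))
     = (if d - N = b then zz G b - zz G (b - 1) else 0)"
proof -
  consider "d - N = b" | "d - N > b" | "d - N < b" by linarith
  thus ?thesis
  proof cases
    case 1
    hence "d - 1 - N = b - 1" by simp
    thus ?thesis using 1 by simp
  next
    case 2
    hence "min b (d - 1 - N) = b" "min (b - 1) (d - 1 - N) = b - 1" "min b (d - N) = b" "min (b - 1) (d - N) = b - 1"
      by auto
    thus ?thesis using 2 by simp
  next
    case 3
    hence "min b (d - 1 - N) = d - N - 1" "min (b - 1) (d - 1 - N) = d - N - 1" "min b (d - N) = d - N" "min (b - 1) (d - N) = d - N"
      by auto
    thus ?thesis using 3 by simp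
  qed
qed

lemma fw1_val:
  assumes "1 \<le> b" "b < d" "d \<le> N + 1"
  shows "fwd_pd G 1 b d = (if d = N + 1 then nat (zz G b - zz G (b - 1)) else 0)"
  unfolding fw1_eval[OF G n1] using assms by (auto simp: Fw1_d)

lemma sum_fw1:
  assumes "1 \<le> b" "b \<le> N"
  shows "(\<Sum>d'\<in>{b<..N + 1}. fwd_pd G 1 b d') = nat (zz G b - zz G (b - 1))"
proof -
  have "{b<..N + 1} = insert (N + 1) {b<..N}" using assms by auto
  hence "(\<Sum>d'\<in>{b<..N + 1}. fwd_pd G 1 b d') = fwd_pd G 1 b (N + 1) + (\<Sum>d'\<in>{b<..N}. fwd_pd G 1 b d')"
    by simp
  moreover have "(\<Sum>d'\<in>{b<..N}. fwd_pd G 1 b d') = 0"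
    using fw1_val[of b] assms by (intro sum.neutral) auto
  moreover have "fwd_pd G 1 b (N + 1) = nat (zz G b - zz G (b - 1))" using fw1_val[of b "N + 1"] assms by simp
  ultimately show ?thesis by simp
qed

lemma claimB:
  "fb_pd G 1 b d = (if b \<le> N then (if d = N + b then (\<Sum>d'\<in>{b<..N + 1}. fwd_pd G 1 b d') else 0)
     else if d \<le> 2 * N then fwd_pd G 0 (b - N) (d - N) else 0)"
proof (cases "b \<le> N")
  case True
  show ?thesis
  proof (cases "b = 0")
    case True
    have "fwd_pd G 1 0 d' = 0" for d' unfolding fw1_eval[OF G n1] by simp
    thus ?thesis unfolding fb1_eval[OF G n1] using True by simp
  next
    case False
    hence b1: "1 \<le> b" by simp
    have X: "F1 G b (d - 1) - F1 G (b - 1) (d - 1) - F1 G b d + F1 G (b - 1) d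
        = (if d - N = b then zz G b - zz G (b - 1) else 0)"
    proof -
      have e1: "F1 G b j = zz G b - zz G (min b (j - N))" for j using F1_lo True by simp
      have e2: "F1 G (b - 1) j = zz G (b - 1) - zz G (min (b - 1) (j - N))" for j using F1_lo[of "b - 1"] True by simp
      show ?thesis unfolding e1 e2 zzdiff[OF b1, of d, symmetric] by linarith
    qed
    show ?thesis
    proof (cases "d = N + b")
      case True
      thus ?thesis unfolding fb1_eval[OF G n1] using X sum_fw1[OF b1 \<open>b \<le> N\<close>] b1 \<open>b \<le> N\<close> n1 by simp
    next
      case False
      have "d - N \<noteq> b" using False b1 by auto
      thus ?thesis unfolding fb1_eval[OF G n1] using X False \<open>b \<le> N\<close> by simp
    qed
  qed
next
  case bn: False
  define i' where "i' = b - N"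
  have b: "b = N + i'" "1 \<le> i'" using bn i'_def by auto
  have Fh: "F1 G b j = ee G N - uu G i' N - ee G (min (j - N) N) + uu G i' (min (j - N) N)"
       "F1 G (b - 1) j = ee G N - uu G (i' - 1) N - ee G (min (j - N) N) + uu G (i' - 1) (min (j - N) N)" for j
    using F1_hi[of b j] F1_hi[of "b - 1" j] b by auto
  show ?thesis
  proof (cases "d \<le> 2 * N")
    case True
    define j' where "j' = d - N"
    show ?thesis
    proof (cases "b < d")
      case True
      have j: "d = N + j'" "i' < j'" "j' \<le> N" using True b \<open>d \<le> 2 * N\<close> j'_def by auto
      have m: "min (d - 1 - N) N = j' - 1" "min (d - N) N = j'" using j by auto
      have v: "F1 G b (d - 1) - F1 G (b - 1) (d - 1) - F1 G b d + F1 G (b - 1) d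
           = uu G i' (j' - 1) - uu G (i' - 1) (j' - 1) - uu G i' j' + uu G (i' - 1) j'"
        unfolding Fh m by linarith
      have w: "Fw0 G i' (j' - 1) - Fw0 G (i' - 1) (j' - 1) - Fw0 G i' j' + Fw0 G (i' - 1) j'
           = uu G i' (j' - 1) - uu G (i' - 1) (j' - 1) - uu G i' j' + uu G (i' - 1) j'"
      proof -
        have "j' - 1 \<le> N" using j by simp
        thus ?thesis using j by (simp add: Fw0_d cc_d)
      qed
      have "fb_pd G 1 b d = nat (uu G i' (j' - 1) - uu G (i' - 1) (j' - 1) - uu G i' j' + uu G (i' - 1) j')"
        unfolding fb1_eval[OF G n1] v[symmetric] using j b by simp
      moreover have "fwd_pd G 0 i' j' = nat (uu G i' (j' - 1) - uu G (i' - 1) (j' - 1) - uu G i' j' + uu G (i' - 1) j')"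
        unfolding fw0_eval[OF G n1] w[symmetric] using j b by simp
      ultimately show ?thesis using bn True \<open>d \<le> 2 * N\<close> i'_def j'_def by simp
    next
      case False
      have "\<not> (b - N < d - N)" using False diff_le_mono[of d b N] by linarith
      thus ?thesis unfolding fb1_eval[OF G n1] fw0_eval[OF G n1] using False bn \<open>d \<le> 2 * N\<close>
        by simp
    qed
  next
    case False
    show ?thesis
    proof (cases "d = 2 * N + 1 \<and> b < d")
      case True
      have m: "min (d - 1 - N) N = N" "min (d - N) N = N" using True by auto
      show ?thesis unfolding fb1_eval[OF G n1] using True m Fh bn b by simp
    next
      case False
      thus ?thesis unfolding fb1_eval[OF G n1] using bn \<open>\<not> d \<le> 2 * N\<close> by auto
    qed
  qed
qed


lemma F0_zero: "F0 G 0 j = 0" by (simp add: F0_d cc0')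
lemma F0_low: "j \<le> N \<Longrightarrow> F0 G i j = cc G i j" by (simp add: F0_d)
lemma F0_top: "N < j \<Longrightarrow> N < j - N \<Longrightarrow> F0 G i j = 0" by (simp add: F0_d)
lemma F0_mid: "1 \<le> i \<Longrightarrow> i \<le> N \<Longrightarrow> N < j \<Longrightarrow> j - N \<le> N \<Longrightarrow>
   F0 G i j = 1 + vv G i - vv G (min i (j - N)) + uu G i N - uu G (min i (j - N)) N"
  by (simp add: F0_d)
lemma F0_hi: "N \<le> i \<Longrightarrow> N < j \<Longrightarrow> j - N \<le> N \<Longrightarrow> F0 G i j = 1 + vv G N - vv G (j - N) - uu G (j - N) N"
proof -
  assume a: "N \<le> i" "N < j" "j - N \<le> N"
  show ?thesis
  proof (cases "i \<le> N")
    case True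
    hence "i = N" using a by simp
    thus ?thesis using a n1 uuii'[of N] by (simp add: F0_d min_def)
  next
    case False thus ?thesis using a n1 by (simp add: F0_d)
  qed
qed

lemma nat_m1: "nat (x - 1) = nat x - 1"
  by linarith

lemma fw0_top:
  assumes "1 \<le> b" "b \<le> N"
  shows "fwd_pd G 0 b (N + 1) = nat (cc G b N - cc G (b - 1) N)"
proof -
  have "b - 1 \<le> N" "\<not> N + 1 \<le> N" using assms by auto
  thus ?thesis unfolding fw0_eval[OF G n1] using assms by (simp add: Fw0_d)
qed

lemma claimC:
  "fb_pd G 0 b d = (if b \<le> N \<and> d \<le> N then fwd_pd G 0 b d
     else if b \<le> N \<and> d = N + b then fwd_pd G 0 b (N + 1) - (if b = 1 then 1 else 0)
     else if b = 1 \<and> b \<le> N \<and> d = 2 * N + 1 then 1 else 0)"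
proof (cases "d \<le> N")
  case True
  have eq: "fb_pd G 0 b d = fwd_pd G 0 b d"
    unfolding fb_pd_def fwd_pd_def by (rule pm_low) (use True in auto)
  show ?thesis
  proof (cases "b \<le> N")
    case True thus ?thesis using eq \<open>d \<le> N\<close> by simp
  next
    case False
    have "fwd_pd G 0 b d = 0" unfolding fwd_pd_def by (rule pm_nonpos) (use False \<open>d \<le> N\<close> in auto)
    thus ?thesis using eq False by simp
  qed
next
  case dN: False
  show ?thesis
  proof (cases "b = 0")
    case True
    thus ?thesis unfolding fb0_eval[OF G n1] using dN by simp
  next
    case False
    hence b1: "1 \<le> b" by simp
    show ?thesis
    proof (cases "b \<le> N")
      case bN: True
      define j' where "j' = d - N"
      have dj: "d = N + j'" "1 \<le> j'" using dN j'_def by auto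
      consider "j' = 1" | "2 \<le> j'" "j' \<le> N" | "j' = N + 1" | "N + 1 < j'" using dj by linarith
      thus ?thesis
      proof cases
        case 1
        hence d: "d = N + 1" using dj by simp
        show ?thesis
        proof (cases "b = 1")
          case True
          have v: "F0 G 1 N - F0 G 0 N - F0 G 1 (N + 1) + F0 G 0 (N + 1) = cc G 1 N - 1"
            using F0_low[of N] F0_zero F0_mid[of 1 "N + 1"] n1 cc0' by simp
          have "fb_pd G 0 b d = nat (cc G 1 N - 1)"
            unfolding fb0_eval[OF G n1] using v True d n1 by simp
          moreover have "fwd_pd G 0 1 (N + 1) = nat (cc G 1 N)" using fw0_top[of 1] n1 cc0' by simp
          ultimately show ?thesis using True d n1 dN nat_m1[of "cc G 1 N"] by simp
        next
          case False
          hence b2: "2 \<le> b" using b1 by simp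
          have m: "min b 1 = 1" "min (b - 1) 1 = 1" "N + 1 - N = 1" using b2 by auto
          have v: "F0 G b N - F0 G (b - 1) N - F0 G b (N + 1) + F0 G (b - 1) (N + 1) = 0"
            using F0_low[of N b] F0_low[of N "b - 1"] F0_mid[of b "N + 1"] F0_mid[of "b - 1" "N + 1"] b2 bN n1 m
            by (simp add: cc_d)
          have "fb_pd G 0 b d = 0"
            unfolding fb0_eval[OF G n1] using v d b2 bN by simp
          thus ?thesis using d False b2 dN by simp
        qed
      next
        case 2
        have dd: "d - 1 - N = j' - 1" "d - N = j'" "N < d - 1" "d - 1 - N \<le> N" "d - N \<le> N" using 2 dj by auto
        have X: "F0 G b (d - 1) - F0 G (b - 1) (d - 1) - F0 G b d + F0 G (b - 1) d =
             (if j' = b then vv G b - vv G (b - 1) + uu G b N - uu G (b - 1) N else 0)"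
        proof (cases "b = 1")
          case True
          have "min 1 (j' - 1) = 1" "min 1 j' = 1" using 2 by auto
          thus ?thesis using F0_mid[of 1 "d - 1"] F0_mid[of 1 d] F0_zero True dd dN n1 2 by simp
        next
          case False
          hence b2: "2 \<le> b" using b1 by simp
          have e: "F0 G b (d - 1) = 1 + vv G b - vv G (min b (j' - 1)) + uu G b N - uu G (min b (j' - 1)) N"
                  "F0 G (b - 1) (d - 1) = 1 + vv G (b - 1) - vv G (min (b - 1) (j' - 1)) + uu G (b - 1) N - uu G (min (b - 1) (j' - 1)) N"
                  "F0 G b d = 1 + vv G b - vv G (min b j') + uu G b N - uu G (min b j') N"
                  "F0 G (b - 1) d = 1 + vv G (b - 1) - vv G (min (b - 1) j') + uu G (b - 1) N - uu G (min (b - 1) j') N"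
          proof -
            have c: "1 \<le> b - 1" "b - 1 \<le> N" "N < d" using b2 bN dN by auto
            show "F0 G b (d - 1) = 1 + vv G b - vv G (min b (j' - 1)) + uu G b N - uu G (min b (j' - 1)) N"
              using F0_mid[OF b1 bN dd(3) dd(4)] unfolding dd(1) .
            show "F0 G (b - 1) (d - 1) = 1 + vv G (b - 1) - vv G (min (b - 1) (j' - 1)) + uu G (b - 1) N - uu G (min (b - 1) (j' - 1)) N"
              using F0_mid[OF c(1) c(2) dd(3) dd(4)] unfolding dd(1) .
            show "F0 G b d = 1 + vv G b - vv G (min b j') + uu G b N - uu G (min b j') N"
              using F0_mid[OF b1 bN c(3) dd(5)] unfolding dd(2) .
            show "F0 G (b - 1) d = 1 + vv G (b - 1) - vv G (min (b - 1) j') + uu G (b - 1) N - uu G (min (b - 1) j') N"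
              using F0_mid[OF c(1) c(2) c(3) dd(5)] unfolding dd(2) .
          qed
          consider "j' = b" | "b < j'" | "j' < b" by linarith
          thus ?thesis
          proof cases
            case 1
            have "min b (j' - 1) = b - 1" "min (b - 1) (j' - 1) = b - 1" "min b j' = b" "min (b - 1) j' = b - 1"
              using 1 by auto
            thus ?thesis unfolding e using 1 by simp
          next
            case 2
            have "min b (j' - 1) = b" "min (b - 1) (j' - 1) = b - 1" "min b j' = b" "min (b - 1) j' = b - 1"
              using 2 by auto
            thus ?thesis unfolding e using 2 by simp
          next
            case 3
            have "min b (j' - 1) = j' - 1" "min (b - 1) (j' - 1) = j' - 1" "min b j' = j'" "min (b - 1) j' = j'"
              using 3 by auto
            thus ?thesis unfolding e using 3 by simp
          qed
        qed
        show ?thesis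
        proof (cases "j' = b")
          case True
          have "b \<noteq> 1" using True 2 by simp
          have "fb_pd G 0 b d = nat (vv G b - vv G (b - 1) + uu G b N - uu G (b - 1) N)"
            unfolding fb0_eval[OF G n1] X using True dj 2 bN by simp
          moreover have "fwd_pd G 0 b (N + 1) = nat (vv G b - vv G (b - 1) + uu G b N - uu G (b - 1) N)"
            using fw0_top[OF b1 bN] by (simp add: cc_d)
          ultimately show ?thesis using True dj dN bN \<open>b \<noteq> 1\<close> by simp
        next
          case False
          have "fb_pd G 0 b d = 0" unfolding fb0_eval[OF G n1] X using False by simp
          moreover have "d \<noteq> N + b" "d \<noteq> 2 * N + 1" using False dj 2 by auto
          ultimately show ?thesis using dN by simp
        qed
      next
        case 3
        hence d: "d = 2 * N + 1" using dj by simp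
        have dd: "N < d - 1" "d - 1 - N = N" "N < d - N" using d n1 by auto
        have "F0 G b (d - 1) = 1" using F0_mid[of b "d - 1"] b1 bN dd by (simp add: min_def)
        moreover have "F0 G (b - 1) (d - 1) = (if b = 1 then 0 else 1)"
          using F0_mid[of "b - 1" "d - 1"] F0_zero b1 bN dd by (auto simp: min_def)
        moreover have "F0 G b d = 0" "F0 G (b - 1) d = 0" using F0_top dd d by auto
        ultimately have "fb_pd G 0 b d = (if b = 1 then 1 else 0)"
          unfolding fb0_eval[OF G n1] using d b1 bN by simp
        moreover have "d \<noteq> N + b" using d bN by simp
        ultimately show ?thesis using d bN dN by simp
      next
        case 4
        have "fb_pd G 0 b d = 0" unfolding fb0_eval[OF G n1] using 4 dj by simp
        moreover have "d \<noteq> N + b" "d \<noteq> 2 * N + 1" using 4 dj bN by auto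
        ultimately show ?thesis using dN by simp
      qed
    next
      case bN: False
      have eqF: "F0 G b j = F0 G (b - 1) j" if "N < j" for j
      proof (cases "j - N \<le> N")
        case True thus ?thesis using F0_hi[of b j] F0_hi[of "b - 1" j] bN that by simp
      next
        case False thus ?thesis using F0_top that by simp
      qed
      have "fb_pd G 0 b d = 0"
      proof (cases "b < d")
        case True
        have "N < d - 1" using True bN by simp
        thus ?thesis unfolding fb0_eval[OF G n1] using eqF[of "d - 1"] eqF[of d] dN by simp
      next
        case False thus ?thesis unfolding fb0_eval[OF G n1] by simp
      qed
      thus ?thesis using bN by simp
    qed
  qed
qed

end

lemma pm_m0: "pers_mult r 0 b d = 0"
proof -
  have "\<not> (1 \<le> b \<and> b < d \<and> d \<le> 0 + 1)" by auto
  thus ?thesis unfolding pers_mult_def Let_def by (rule if_not_P)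
qed

lemma fw_n0: "nsteps G = 0 \<Longrightarrow> fwd_pd G k b d = 0"
  unfolding fwd_pd_def using pm_m0 by simp
lemma fb_n0: "nsteps G = 0 \<Longrightarrow> fb_pd G k b d = 0"
  unfolding fb_pd_def using pm_m0 by simp

lemma S_B:
  assumes G: "filtered_graph G"
  shows "fb_pd G 1 b d = (if b \<le> nsteps G then (if d = nsteps G + b then (\<Sum>d'\<in>{b<..nsteps G + 1}. fwd_pd G 1 b d') else 0)
     else if d \<le> 2 * nsteps G then fwd_pd G 0 (b - nsteps G) (d - nsteps G) else 0)"
proof (cases "nsteps G = 0")
  case True thus ?thesis using fw_n0[OF True] fb_n0[OF True] by simp
next
  case False thus ?thesis using claimB[OF G] by simp
qed

lemma S_C:
  assumes G: "filtered_graph G"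
  shows "fb_pd G 0 b d = (if b \<le> nsteps G \<and> d \<le> nsteps G then fwd_pd G 0 b d
     else if b \<le> nsteps G \<and> d = nsteps G + b then fwd_pd G 0 b (nsteps G + 1) - (if b = 1 then 1 else 0)
     else if b = 1 \<and> b \<le> nsteps G \<and> d = 2 * nsteps G + 1 then 1 else 0)"
proof (cases "nsteps G = 0")
  case True thus ?thesis using fw_n0[OF True] fb_n0[OF True] by simp
next
  case False thus ?thesis using claimC[OF G] by simp
qed

lemma S_low: "d \<le> nsteps G \<Longrightarrow> fb_pd G k b d = fwd_pd G k b d"
  unfolding fb_pd_def fwd_pd_def by (rule pm_low) auto

lemma S_fwhi: "nsteps G + 1 < d \<Longrightarrow> fwd_pd G k b d = 0"
  unfolding fwd_pd_def by (rule pm_high)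

lemma S_fbhi: "2 * nsteps G + 1 < d \<Longrightarrow> fb_pd G k b d = 0"
  unfolding fb_pd_def by (rule pm_high)

lemma S_k2: "2 \<le> k \<Longrightarrow> fwd_pd G k b d = 0 \<and> fb_pd G k b d = 0"
  unfolding fwd_pd_def fb_pd_def using pm_zero[of "hrank G k"] hrank_ge2[of k G] by simp

lemma S_nonpos: "\<not> (1 \<le> b \<and> b < d) \<Longrightarrow> fwd_pd G k b d = 0"
  unfolding fwd_pd_def by (rule pm_nonpos)

lemma S_pos:
  assumes G: "filtered_graph G" and n1: "1 \<le> nsteps G"
  shows "1 \<le> fwd_pd G 0 1 (nsteps G + 1)"
proof -
  have a: "Fw0 G 1 (nsteps G) = int (hrank G 0 1 (nsteps G))"
    using L_fw0[OF G n1, of 1 "nsteps G"] n1 by simp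
  have b: "Fw0 G 0 (nsteps G) = 0" "Fw0 G 1 (nsteps G + 1) = 0" "Fw0 G 0 (nsteps G + 1) = 0"
    using cc0[OF G n1] by (simp_all add: Fw0_def[OF G n1])
  have "fwd_pd G 0 1 (nsteps G + 1) = hrank G 0 1 (nsteps G)"
    unfolding fw0_eval[OF G n1] using a b n1 by simp
  thus ?thesis using hrank0_pos[OF G n1] by simp
qed

lemma S_fb_top:
  assumes G: "filtered_graph G" and n1: "1 \<le> nsteps G"
  shows "fb_pd G 0 1 (2 * nsteps G + 1) = 1"
  using S_C[OF G, of 1 "2 * nsteps G + 1"] n1 by simp

theorem proposition6:
  fixes G :: "('v, 'e) fgraph" and G' :: "('w, 'f) fgraph"
  assumes "filtered_graph G" and "filtered_graph G'"
  shows "((\<forall>k b d. fwd_pd G k b d = fwd_pd G' k b d) \<longleftrightarrow>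
          (\<forall>k b d. fb_pd G k b d = fb_pd G' k b d))
    \<and> (\<forall>b d. fb_pd G 1 b d =
          (if b \<le> nsteps G then
             (if d = nsteps G + b then (\<Sum>d'\<in>{b<..nsteps G + 1}. fwd_pd G 1 b d') else 0)
           else if d \<le> 2 * nsteps G then fwd_pd G 0 (b - nsteps G) (d - nsteps G)
           else 0))
    \<and> (\<forall>b d. fb_pd G 0 b d =
          (if b \<le> nsteps G \<and> d \<le> nsteps G then fwd_pd G 0 b d
           else if b \<le> nsteps G \<and> d = nsteps G + b
             then fwd_pd G 0 b (nsteps G + 1) - (if b = 1 then 1 else 0)
           else if b = 1 \<and> b \<le> nsteps G \<and> d = 2 * nsteps G + 1 then 1
           else 0))"
proof -
  let ?n = "nsteps G" and ?n' = "nsteps G'"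
  note G = assms(1) and G' = assms(2)
  have P2: "\<forall>b d. fb_pd G 1 b d =
          (if b \<le> nsteps G then
             (if d = nsteps G + b then (\<Sum>d'\<in>{b<..nsteps G + 1}. fwd_pd G 1 b d') else 0)
           else if d \<le> 2 * nsteps G then fwd_pd G 0 (b - nsteps G) (d - nsteps G)
           else 0)"
    using S_B[OF G] by blast
  have P3: "\<forall>b d. fb_pd G 0 b d =
          (if b \<le> nsteps G \<and> d \<le> nsteps G then fwd_pd G 0 b d
           else if b \<le> nsteps G \<and> d = nsteps G + b
             then fwd_pd G 0 b (nsteps G + 1) - (if b = 1 then 1 else 0)
           else if b = 1 \<and> b \<le> nsteps G \<and> d = 2 * nsteps G + 1 then 1
           else 0)"
    using S_C[OF G] by blast
  have nfw: "?n = ?n'" if FW: "\<forall>k b d. fwd_pd G k b d = fwd_pd G' k b d"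
  proof (rule ccontr)
    assume ne: "?n \<noteq> ?n'"
    show False
    proof (cases "?n < ?n'")
      case True
      have "1 \<le> fwd_pd G' 0 1 (?n' + 1)" using S_pos[OF G'] True by simp
      moreover have "fwd_pd G 0 1 (?n' + 1) = 0" using S_fwhi[of G "?n' + 1"] True by simp
      ultimately show False using FW by simp
    next
      case False
      hence "?n' < ?n" using ne by simp
      have "1 \<le> fwd_pd G 0 1 (?n + 1)" using S_pos[OF G] \<open>?n' < ?n\<close> by simp
      moreover have "fwd_pd G' 0 1 (?n + 1) = 0" using S_fwhi[of G' "?n + 1"] \<open>?n' < ?n\<close> by simp
      ultimately show False using FW by simp
    qed
  qed
  have nfb: "?n = ?n'" if FB: "\<forall>k b d. fb_pd G k b d = fb_pd G' k b d"
  proof (rule ccontr)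
    assume ne: "?n \<noteq> ?n'"
    show False
    proof (cases "?n < ?n'")
      case True
      have "fb_pd G' 0 1 (2 * ?n' + 1) = 1" using S_fb_top[OF G'] True by simp
      moreover have "fb_pd G 0 1 (2 * ?n' + 1) = 0" using S_fbhi[of G "2 * ?n' + 1"] True by simp
      ultimately show False using FB by simp
    next
      case False
      hence "?n' < ?n" using ne by simp
      have "fb_pd G 0 1 (2 * ?n + 1) = 1" using S_fb_top[OF G] \<open>?n' < ?n\<close> by simp
      moreover have "fb_pd G' 0 1 (2 * ?n + 1) = 0" using S_fbhi[of G' "2 * ?n + 1"] \<open>?n' < ?n\<close> by simp
      ultimately show False using FB by simp
    qed
  qed
  have P1: "(\<forall>k b d. fwd_pd G k b d = fwd_pd G' k b d) \<longleftrightarrow> (\<forall>k b d. fb_pd G k b d = fb_pd G' k b d)"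
  proof
    assume FW: "\<forall>k b d. fwd_pd G k b d = fwd_pd G' k b d"
    have nn: "?n = ?n'" using nfw[OF FW] .
    have F0: "fwd_pd G 0 = fwd_pd G' 0" and F1: "fwd_pd G 1 = fwd_pd G' 1" using FW by (auto intro!: ext)
    show "\<forall>k b d. fb_pd G k b d = fb_pd G' k b d"
    proof (intro allI)
      fix k b d :: nat
      consider "k = 0" | "k = 1" | "2 \<le> k" by linarith
      thus "fb_pd G k b d = fb_pd G' k b d"
      proof cases
        case 1 thus ?thesis using S_C[OF G, of b d] S_C[OF G', of b d] nn F0 by simp
      next
        case 2 thus ?thesis using S_B[OF G, of b d] S_B[OF G', of b d] nn F0 F1 by simp
      next
        case 3 thus ?thesis using S_k2[OF 3, of G] S_k2[OF 3, of G'] by simp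
      qed
    qed
  next
    assume FB: "\<forall>k b d. fb_pd G k b d = fb_pd G' k b d"
    have nn: "?n = ?n'" using nfb[OF FB] .
    show "\<forall>k b d. fwd_pd G k b d = fwd_pd G' k b d"
    proof (intro allI)
      fix k b d :: nat
      show "fwd_pd G k b d = fwd_pd G' k b d"
      proof (cases "2 \<le> k")
        case True thus ?thesis using S_k2[OF True, of G] S_k2[OF True, of G'] by simp
      next
        case k01: False
        consider "d \<le> ?n" | "?n + 1 < d" | "d = ?n + 1" by linarith
        thus ?thesis
        proof cases
          case 1 thus ?thesis using S_low[OF 1, of k b] S_low[of d G' k b] 1 nn FB by simp
        next
          case 2 thus ?thesis using S_fwhi[OF 2, of k b] S_fwhi[of G' d k b] 2 nn by simp
        next
          case 3
          show ?thesis
          proof (cases "1 \<le> b \<and> b \<le> ?n")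
            case False
            hence "\<not> (1 \<le> b \<and> b < d)" using 3 by auto
            thus ?thesis using S_nonpos[of b d G k] S_nonpos[of b d G' k] by simp
          next
            case True
            hence b1: "1 \<le> b" and bn: "b \<le> ?n" by auto
            have n1: "1 \<le> ?n" "1 \<le> ?n'" using True nn by auto
            have nd: "\<not> d \<le> ?n" using 3 by simp
            show ?thesis
            proof (cases "k = 0")
              case True
              have e: "fb_pd G 0 b (?n + b) = fwd_pd G 0 b (?n + 1) - (if b = 1 then 1 else 0)"
                using S_C[OF G, of b "?n + b"] bn b1 by simp
              have e': "fb_pd G' 0 b (?n + b) = fwd_pd G' 0 b (?n + 1) - (if b = 1 then 1 else 0)"
                using S_C[OF G', of b "?n + b"] bn b1 nn by simp
              have "fwd_pd G 0 b (?n + 1) - (if b = 1 then 1 else 0) = fwd_pd G' 0 b (?n + 1) - (if b = 1 then 1 else 0)"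
                using e e' FB by metis
              moreover have "b = 1 \<Longrightarrow> 1 \<le> fwd_pd G 0 b (?n + 1) \<and> 1 \<le> fwd_pd G' 0 b (?n + 1)"
                using S_pos[OF G n1(1)] S_pos[OF G' n1(2)] nn by simp
              ultimately have "fwd_pd G 0 b (?n + 1) = fwd_pd G' 0 b (?n + 1)"
                by (cases "b = 1") auto
              thus ?thesis using True 3 nn by simp
            next
              case False
              hence k1: "k = 1" using k01 by simp
              have split: "(\<Sum>d'\<in>{b<..?n + 1}. fwd_pd H 1 b d') = fwd_pd H 1 b (?n + 1) + (\<Sum>d'\<in>{b<..?n}. fwd_pd H 1 b d')"
                for H :: "('c, 'd) fgraph"
              proof -
                have "{b<..?n + 1} = insert (?n + 1) {b<..?n}" using bn by auto
                thus ?thesis by simp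
              qed
              have e: "fb_pd G 1 b (?n + b) = (\<Sum>d'\<in>{b<..?n + 1}. fwd_pd G 1 b d')"
                using S_B[OF G, of b "?n + b"] bn by simp
              have e': "fb_pd G' 1 b (?n + b) = (\<Sum>d'\<in>{b<..?n + 1}. fwd_pd G' 1 b d')"
                using S_B[OF G', of b "?n + b"] bn nn by simp
              have low: "(\<Sum>d'\<in>{b<..?n}. fwd_pd G 1 b d') = (\<Sum>d'\<in>{b<..?n}. fwd_pd G' 1 b d')"
              proof (rule sum.cong[OF refl])
                fix d' assume "d' \<in> {b<..?n}"
                hence "d' \<le> ?n" "d' \<le> ?n'" using nn by auto
                thus "fwd_pd G 1 b d' = fwd_pd G' 1 b d'"
                  using S_low[of d' G 1 b] S_low[of d' G' 1 b] FB by simp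
              qed
              have "fwd_pd G 1 b (?n + 1) = fwd_pd G' 1 b (?n + 1)"
                using e e' FB split[of G] split[of G'] low by simp
              thus ?thesis using k1 3 by simp
            qed
          qed
        qed
      qed
    qed
  qed
  show ?thesis using P1 P2 P3 by blast
qed

end
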